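(* Consider the two compact finite difference schemes (described in the context) for the two-dimensional two-sided space fractional diffusion problem with $1<\alpha,\beta\le2$. If $(p,q)=(1,0)$, both schemes are unconditionally stable for all $1<\alpha,\beta\le2$; if $(p,q)=(1,-1)$, both schemes are unconditionally stable for all $\frac{1+\sqrt{73}}{6}\le\alpha,\beta\le2$.
   Context: Problem on $\Omega=(a,b)\times(c,d)$, $t\in(0,T]$: $\partial_tu=K_1^+\,{}_aD_x^\alpha u+K_2^+\,{}_xD_b^\alpha u+K_1^-\,{}_cD_y^\beta u+K_2^-\,{}_yD_d^\beta u+f$, $u(\cdot,\cdot,0)=u_0$, $u=\varphi$ on $\partial\Omega$, with constants $K_i^\pm\ge0$, $(K_1^+)^2+(K_2^+)^2\ne0$, $(K_1^-)^2+(K_2^-)^2\ne0$; ${}_aD_x^\alpha,{}_xD_b^\alpha$ (resp. ${}_cD_y^\beta,{}_yD_d^\beta$) are the left and right Riemann–Liouville derivatives in $x$ on $(a,b)$ (resp. in $y$ on $(c,d)$). Grid: common step $h$ with $b-a=N_xh$, $d-c=N_yh$, $\tau=T/M$, $x_i=a+ih$, $y_j=c+jh$, $t_n=n\tau$. For $\gamma\in\{\alpha,\beta\}$ let $g_k^{(\gamma)}=(-1)^k\binom{\gamma}{k}$ and define weights $w_k^{(\gamma)}$: for $(p,q)=(1,0)$, $w_0^{(\gamma)}=\frac{\gamma}{2}g_0^{(\gamma)}$, $w_k^{(\gamma)}=\frac{\gamma}{2}g_k^{(\gamma)}+\frac{2-\gamma}{2}g_{k-1}^{(\gamma)}$ ($k\ge1$);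 for $(p,q)=(1,-1)$, $w_0^{(\gamma)}=\frac{2+\gamma}{4}g_0^{(\gamma)}$, $w_1^{(\gamma)}=\frac{2+\gamma}{4}g_1^{(\gamma)}$, $w_k^{(\gamma)}=\frac{2+\gamma}{4}g_k^{(\gamma)}+\frac{2-\gamma}{4}g_{k-2}^{(\gamma)}$ ($k\ge2$). Let $c^\gamma=\frac{7\gamma-3\gamma^2}{24}$ for $(p,q)=(1,0)$ and $c^\gamma=\frac{\gamma-3\gamma^2+12}{24}$ for $(p,q)=(1,-1)$. Operators on grid functions: $\mathcal{C}_xV_{i,j}=V_{i,j}+c^\alpha(V_{i-1,j}-2V_{i,j}+V_{i+1,j})$, $\mathcal{C}_yV_{i,j}=V_{i,j}+c^\beta(V_{i,j-1}-2V_{i,j}+V_{i,j+1})$, $\delta_x^\alpha V_{i,j}=\frac{K_1^+}{h^\alpha}\sum_{k=0}^{i+1}w_k^{(\alpha)}V_{i-k+1,j}+\frac{K_2^+}{h^\alpha}\sum_{k=0}^{N_x-i+1}w_k^{(\alpha)}V_{i+k-1,j}$, $\delta_y^\beta V_{i,j}=\frac{K_1^-}{h^\beta}\sum_{k=0}^{j+1}w_k^{(\beta)}V_{i,j-k+1}+\frac{K_2^-}{h^\beta}\sum_{k=0}^{N_y-j+1}w_k^{(\beta)}V_{i,j+k-1}$. Scheme I: $(\mathcal{C}_x-\frac{\tau}{2}\delta_x^\alpha)(\mathcal{C}_y-\frac{\tau}{2}\delta_y^\beta)U^{n+1}_{i,j}=(\mathcal{C}_x+\frac{\tau}{2}\delta_x^\alpha)(\mathcal{C}_y+\frac{\tau}{2}\delta_y^\beta)U^n_{i,j}+\tau\mathcal{C}_x\mathcal{C}_yf^{n+1/2}_{i,j}$;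 Scheme II: the same with the additional source term $\frac{\tau^3}{4}\delta_x^\alpha\delta_y^\beta f^{n+1/2}_{i,j}$ on the right; here $1\le i\le N_x-1$, $1\le j\le N_y-1$, $f^{n+1/2}_{i,j}=f(x_i,y_j,t_n+\tau/2)$, with boundary values from $\varphi$. For $m\in\{N_x,N_y\}$ and $\gamma\in\{\alpha,\beta\}$ let $A_\gamma$ be the $(m-1)\times(m-1)$ matrix with entries $w^{(\gamma)}_{i-j+1}$ when $i-j+1\ge0$ and $0$ otherwise, and $C_\gamma=I+c^\gamma\,\mathrm{tridiag}(1,-2,1)$ (with $m=N_x$ for $\alpha$, $m=N_y$ for $\beta$). Ordering the interior unknowns with $i$ running fastest, set $\mathcal{C}_x=I_y\otimes C_\alpha$, $\mathcal{C}_y=C_\beta\otimes I_x$, $\mathcal{D}_x=\frac{\tau}{2h^\alpha}I_y\otimes(K_1^+A_\alpha+K_2^+A_\alpha^T)$, $\mathcal{D}_y=\frac{\tau}{2h^\beta}(K_1^-A_\beta+K_2^-A_\beta^T)\otimes I_x$, where $I_x,I_y$ are identities of orders $N_x-1,N_y-1$. Perturbations of the interior solution propagate (for both schemes) as $\delta U^{n+1}=G\,\delta U^n$ with $G=(\mathcal{C}_y-\mathcal{D}_y)^{-1}(\mathcal{C}_x-\mathcal{D}_x)^{-1}(\mathcal{C}_x+\mathcal{D}_x)(\mathcal{C}_y+\mathcal{D}_y)$. Unconditionally stable means: for all $\tau,h>0$ the inverted matrices exist and $G^n\to0$ as $n\to\infty$. *)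

theory Defs
  imports Complex_Main "Jordan_Normal_Form.Matrix"
begin

definition gcoef :: "real \<Rightarrow> nat \<Rightarrow> real" where
  "gcoef \<gamma> k = (-1) ^ k * (\<gamma> gchoose k)"

text \<open>Shift parameters (p,q): only (1,0) and (1,-1) are considered.\<close>
datatype shift = PQ_1_0 | PQ_1_m1

definition wcoef :: "shift \<Rightarrow> real \<Rightarrow> nat \<Rightarrow> real" where
  "wcoef s \<gamma> k = (case s of
      PQ_1_0 \<Rightarrow> (if k = 0 then \<gamma> / 2 * gcoef \<gamma> 0
                else \<gamma> / 2 * gcoef \<gamma> k + (2 - \<gamma>) / 2 * gcoef \<gamma> (k - 1))
    | PQ_1_m1 \<Rightarrow> (if k < 2 then (2 + \<gamma>) / 4 * gcoef \<gamma> k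
                else (2 + \<gamma>) / 4 * gcoef \<gamma> k + (2 - \<gamma>) / 4 * gcoef \<gamma> (k - 2)))"

definition ccoef :: "shift \<Rightarrow> real \<Rightarrow> real" where
  "ccoef s \<gamma> = (case s of
      PQ_1_0 \<Rightarrow> (7 * \<gamma> - 3 * \<gamma>\<^sup>2) / 24
    | PQ_1_m1 \<Rightarrow> (\<gamma> - 3 * \<gamma>\<^sup>2 + 12) / 24)"

definition Amat :: "shift \<Rightarrow> real \<Rightarrow> nat \<Rightarrow> real mat" where
  "Amat s \<gamma> m = mat (m - 1) (m - 1)
     (\<lambda>(i, j). if j \<le> i + 1 then wcoef s \<gamma> (i + 1 - j) else 0)"

definition tridiag :: "nat \<Rightarrow> real mat" where
  "tridiag n = mat n n (\<lambda>(i, j). if i = j then -2 else if i = j + 1 \<or> j = i + 1 then 1 else 0)"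

definition Cmat :: "shift \<Rightarrow> real \<Rightarrow> nat \<Rightarrow> real mat" where
  "Cmat s \<gamma> m = 1\<^sub>m (m - 1) + ccoef s \<gamma> \<cdot>\<^sub>m tridiag (m - 1)"

definition kron :: "real mat \<Rightarrow> real mat \<Rightarrow> real mat" where
  "kron A B = mat (dim_row A * dim_row B) (dim_col A * dim_col B)
     (\<lambda>(i, j). A $$ (i div dim_row B, j div dim_col B) * B $$ (i mod dim_row B, j mod dim_col B))"

definition matinv :: "real mat \<Rightarrow> real mat" where
  "matinv A = (SOME B. inverts_mat A B \<and> inverts_mat B A)"

definition CXm where "CXm s \<alpha> Nx Ny = kron (1\<^sub>m (Ny - 1)) (Cmat s \<alpha> Nx)"
definition CYm where "CYm s \<beta> Nx Ny = kron (Cmat s \<beta> Ny) (1\<^sub>m (Nx - 1))"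
definition DXm where "DXm s \<alpha> Nx Ny \<tau> h K1p K2p =
   (\<tau> / (2 * h powr \<alpha>)) \<cdot>\<^sub>m kron (1\<^sub>m (Ny - 1))
      (K1p \<cdot>\<^sub>m Amat s \<alpha> Nx + K2p \<cdot>\<^sub>m transpose_mat (Amat s \<alpha> Nx))"
definition DYm where "DYm s \<beta> Nx Ny \<tau> h K1m K2m =
   (\<tau> / (2 * h powr \<beta>)) \<cdot>\<^sub>m kron
      (K1m \<cdot>\<^sub>m Amat s \<beta> Ny + K2m \<cdot>\<^sub>m transpose_mat (Amat s \<beta> Ny)) (1\<^sub>m (Nx - 1))"

definition uncond_stable :: "shift \<Rightarrow> real \<Rightarrow> real \<Rightarrow> bool" where
  "uncond_stable s \<alpha> \<beta> \<longleftrightarrow>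
    (\<forall>Nx Ny \<tau> h K1p K2p K1m K2m.
       1 \<le> Nx \<and> 1 \<le> Ny \<and> 0 < \<tau> \<and> 0 < h \<and>
       0 \<le> K1p \<and> 0 \<le> K2p \<and> 0 \<le> K1m \<and> 0 \<le> K2m \<and>
       K1p\<^sup>2 + K2p\<^sup>2 \<noteq> 0 \<and> K1m\<^sup>2 + K2m\<^sup>2 \<noteq> 0 \<longrightarrow>
       (let Cx = CXm s \<alpha> Nx Ny; Cy = CYm s \<beta> Nx Ny;
            Dx = DXm s \<alpha> Nx Ny \<tau> h K1p K2p; Dy = DYm s \<beta> Nx Ny \<tau> h K1m K2m;
            G = matinv (Cy - Dy) * matinv (Cx - Dx) * (Cx + Dx) * (Cy + Dy);
            d = (Nx - 1) * (Ny - 1)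
        in invertible_mat (Cy - Dy) \<and> invertible_mat (Cx - Dx) \<and>
           (\<forall>i<d. \<forall>j<d. (\<lambda>n. (G ^\<^sub>m n) $$ (i, j)) \<longlonglongrightarrow> 0)))"

end

theory Submission
  imports Defs "Jordan_Normal_Form.Spectral_Radius"
begin


definition qf :: "real mat \<Rightarrow> nat \<Rightarrow> (nat \<Rightarrow> real) \<Rightarrow> real" where
  "qf M n x = (\<Sum>i<n. \<Sum>j<n. M $$ (i,j) * x i * x j)"
definition mv :: "real mat \<Rightarrow> nat \<Rightarrow> (nat \<Rightarrow> real) \<Rightarrow> nat \<Rightarrow> real" where
  "mv M n x i = (\<Sum>j<n. M $$ (i,j) * x j)"

lemma qf_cong: "(\<And>i. i < n \<Longrightarrow> x i = y i) \<Longrightarrow> qf M n x = qf M n y"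
  unfolding qf_def by (intro sum.cong refl) auto

lemma mv_cong: "(\<And>i. i < n \<Longrightarrow> x i = y i) \<Longrightarrow> mv M n x i = mv M n y i"
  unfolding mv_def by (intro sum.cong refl) auto

lemma qf_mv: "qf M n x = (\<Sum>i<n. x i * mv M n x i)"
  unfolding qf_def mv_def by (simp add: sum_distrib_left mult.commute mult.left_commute)

lemma mult_mat_vec_mv: assumes "M \<in> carrier_mat n n" "v \<in> carrier_vec n" "i < n"
  shows "(M *\<^sub>v v) $ i = mv M n (\<lambda>j. v $ j) i"
  using assms unfolding mv_def by (auto simp: scalar_prod_def atLeast0LessThan intro!: sum.cong)

lemma mv_minus: assumes "C \<in> carrier_mat n n" "D \<in> carrier_mat n n" "i < n"
  shows "mv (C - D) n x i = mv C n x i - mv D n x i"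
  using assms unfolding mv_def unfolding sum_subtractf[symmetric] by (intro sum.cong refl) (auto simp: left_diff_distrib)

lemma mv_plus: assumes "C \<in> carrier_mat n n" "D \<in> carrier_mat n n" "i < n"
  shows "mv (C + D) n x i = mv C n x i + mv D n x i"
  using assms unfolding mv_def unfolding sum.distrib[symmetric] by (intro sum.cong refl) (auto simp: distrib_right)

lemma mv_mult: assumes "A \<in> carrier_mat n n" "B \<in> carrier_mat n n" "i < n"
  shows "mv (A * B) n x i = mv A n (mv B n x) i"
proof -
  have "mv (A * B) n x i = (\<Sum>j<n. (\<Sum>k<n. A $$ (i,k) * B $$ (k,j)) * x j)"
    unfolding mv_def using assms by (intro sum.cong refl) (auto simp: scalar_prod_def atLeast0LessThan)
  also have "\<dots> = (\<Sum>k<n. A $$ (i,k) * (\<Sum>j<n. B $$ (k,j) * x j))"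
    by (simp add: sum_distrib_left sum_distrib_right mult.assoc) (rule sum.swap)
  finally show ?thesis unfolding mv_def .
qed

lemma mv_lin: "mv M n (\<lambda>i. a * x i + b * y i) j = a * mv M n x j + b * mv M n y j"
  unfolding mv_def by (simp add: sum.distrib sum_distrib_left algebra_simps)

lemma mv_zero: "(\<And>i. i < n \<Longrightarrow> x i = 0) \<Longrightarrow> mv M n x j = 0"
  unfolding mv_def by auto

lemma qf_zero: "(\<And>i. i < n \<Longrightarrow> x i = 0) \<Longrightarrow> qf M n x = 0"
  unfolding qf_def by auto

lemma energy_step:
  assumes symC: "\<And>i j. i < n \<Longrightarrow> j < n \<Longrightarrow> C $$ (i,j) = C $$ (j,i)"
    and posC: "\<And>x. (\<exists>i<n. x i \<noteq> 0) \<Longrightarrow> qf C n x > 0"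
    and negD: "\<And>x. (\<exists>i<n. x i \<noteq> 0) \<Longrightarrow> qf D n x < 0"
    and eq: "\<And>i. i < n \<Longrightarrow> mv C n w i - mv D n w i = mv C n v i + mv D n v i"
    and nz: "\<exists>i<n. v i \<noteq> 0"
  shows "qf C n w < qf C n v"
proof -
  define s where "s = (\<lambda>i. w i + v i)"
  define t where "t = (\<lambda>i. w i - v i)"
  have ct: "mv C n t i = mv D n s i" if "i < n" for i
  proof -
    have "mv C n t i = mv C n w i - mv C n v i"
      unfolding t_def mv_def by (simp add: sum_subtractf algebra_simps)
    moreover have "mv D n s i = mv D n w i + mv D n v i"
      unfolding s_def mv_def by (simp add: sum.distrib algebra_simps)
    ultimately show ?thesis using eq[OF that] by simp
  qed
  have swap: "(\<Sum>i<n. \<Sum>j<n. C $$ (i,j) * v i * w j) = (\<Sum>i<n. \<Sum>j<n. C $$ (i,j) * w i * v j)"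
    by (subst sum.swap) (intro sum.cong refl, simp add: symC)
  have key: "(\<Sum>i<n. s i * mv C n t i) = qf C n w - qf C n v"
  proof -
    have "(\<Sum>i<n. s i * mv C n t i) = (\<Sum>i<n. \<Sum>j<n. C $$ (i,j) * w i * w j)
        - (\<Sum>i<n. \<Sum>j<n. C $$ (i,j) * v i * v j)
        + ((\<Sum>i<n. \<Sum>j<n. C $$ (i,j) * v i * w j) - (\<Sum>i<n. \<Sum>j<n. C $$ (i,j) * w i * v j))"
      unfolding s_def t_def mv_def
      by (simp add: sum_distrib_left sum.distrib sum_subtractf ring_distribs mult.assoc mult.left_commute)
    then show ?thesis unfolding swap qf_def by simp
  qed
  have "(\<Sum>i<n. s i * mv C n t i) = (\<Sum>i<n. s i * mv D n s i)"
    by (intro sum.cong refl) (simp add: ct)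
  also have "\<dots> = qf D n s" by (simp add: qf_mv)
  finally have E: "qf C n w - qf C n v = qf D n s" using key by simp
  show ?thesis
  proof (cases "\<exists>i<n. s i \<noteq> 0")
    case True then show ?thesis using negD[OF True] E by simp
  next
    case False
    then have s0: "\<And>i. i < n \<Longrightarrow> s i = 0" by auto
    have "qf C n t = (\<Sum>i<n. t i * mv C n t i)" by (simp add: qf_mv)
    also have "\<dots> = 0" using ct s0 mv_zero[of n s D] by simp
    finally have "qf C n t = 0" .
    moreover from nz obtain i where "i < n" "v i \<noteq> 0" by auto
    then have "t i \<noteq> 0" using s0[of i] unfolding s_def t_def by simp
    with \<open>i < n\<close> have "qf C n t > 0" using posC by blast
    ultimately show ?thesis by simp
  qed
qed


declare minus_carrier_mat[simp]

lemma matinv_eq: assumes P: "P \<in> carrier_mat n n" and B: "B \<in> carrier_mat n n"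
  and PB: "P * B = 1\<^sub>m n" and BP: "B * P = 1\<^sub>m n"
  shows "matinv P = B"
proof -
  have ex: "\<exists>B. inverts_mat P B \<and> inverts_mat B P" using P B PB BP unfolding inverts_mat_def by auto
  define B' where "B' = matinv P"
  have "inverts_mat P B' \<and> inverts_mat B' P" unfolding B'_def matinv_def by (rule someI_ex[OF ex])
  then have PB': "P * B' = 1\<^sub>m n" and B'P: "B' * P = 1\<^sub>m (dim_row B')" using P unfolding inverts_mat_def by auto
  have dr: "dim_row B' = n" using arg_cong[OF B'P, of dim_col] P by simp
  have dc: "dim_col B' = n" using arg_cong[OF PB', of dim_col] by simp
  have B'c: "B' \<in> carrier_mat n n" using dr dc by auto
  have "B = B * (P * B')" using PB' B by simp
  also have "\<dots> = (B * P) * B'" using B P B'c by (simp add: assoc_mult_mat)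
  also have "\<dots> = B'" using BP B'c by simp
  finally show ?thesis unfolding B'_def by simp
qed

lemma inv_of_kernel: fixes P :: "real mat" assumes P: "P \<in> carrier_mat n n"
  and ker: "\<And>v. v \<in> carrier_vec n \<Longrightarrow> P *\<^sub>v v = 0\<^sub>v n \<Longrightarrow> v = 0\<^sub>v n"
  shows "\<exists>B \<in> carrier_mat n n. P * B = 1\<^sub>m n \<and> B * P = 1\<^sub>m n"
proof -
  have "det P \<noteq> 0" using det_0_iff_vec_prod_zero[OF P] ker by auto
  from det_non_zero_imp_unit[OF P this, of "()"]
  show ?thesis unfolding Units_def by (auto simp: ring_mat_simps)
qed

lemma inv_from_forms:
  assumes C: "C \<in> carrier_mat n n" and D: "D \<in> carrier_mat n n"
    and posC: "\<And>x. (\<exists>i<n. x i \<noteq> 0) \<Longrightarrow> qf C n x > 0"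
    and negD: "\<And>x. (\<exists>i<n. x i \<noteq> 0) \<Longrightarrow> qf D n x < 0"
  shows "\<exists>B \<in> carrier_mat n n. (C - D) * B = 1\<^sub>m n \<and> B * (C - D) = 1\<^sub>m n"
proof (rule inv_of_kernel)
  show "C - D \<in> carrier_mat n n" using C D by simp
  fix v :: "real vec" assume v: "v \<in> carrier_vec n" and Pv: "(C - D) *\<^sub>v v = 0\<^sub>v n"
  show "v = 0\<^sub>v n"
  proof (rule ccontr)
    assume "v \<noteq> 0\<^sub>v n"
    then obtain i where i: "i < n" "v $ i \<noteq> 0" using v by (auto simp: vec_eq_iff)
    have eqm: "mv C n (\<lambda>j. v $ j) k = mv D n (\<lambda>j. v $ j) k" if "k < n" for k
    proof -
      have "((C - D) *\<^sub>v v) $ k = 0" using Pv that by simp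
      then show ?thesis using mult_mat_vec_mv[of "C - D" n v k] mv_minus[OF C D that] C D v that by simp
    qed
    have "qf C n (\<lambda>j. v $ j) = qf D n (\<lambda>j. v $ j)" unfolding qf_mv
      by (intro sum.cong refl) (simp add: eqm)
    moreover have "qf C n (\<lambda>j. v $ j) > 0" "qf D n (\<lambda>j. v $ j) < 0" using posC negD i by auto
    ultimately show False by simp
  qed
qed


lemma qf_rot: "qf C n (\<lambda>i. r * a i - s * b i) + qf C n (\<lambda>i. s * a i + r * b i)
   = (r^2 + s^2) * (qf C n a + qf C n b)"
proof -
  have t: "C$$(i,j) * (r*a i - s*b i) * (r*a j - s*b j) + C$$(i,j)*(s*a i + r*b i)*(s*a j + r*b j)
     = (r^2+s^2) * (C$$(i,j)*a i*a j + C$$(i,j)*b i*b j)" for i j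
    by (simp add: algebra_simps power2_eq_square)
  have "qf C n (\<lambda>i. r * a i - s * b i) + qf C n (\<lambda>i. s * a i + r * b i)
     = (\<Sum>i<n. \<Sum>j<n. C$$(i,j) * (r*a i - s*b i) * (r*a j - s*b j) + C$$(i,j)*(s*a i + r*b i)*(s*a j + r*b j))"
    unfolding qf_def by (simp only: sum.distrib)
  also have "\<dots> = (\<Sum>i<n. \<Sum>j<n. (r^2+s^2) * (C$$(i,j)*a i*a j + C$$(i,j)*b i*b j))"
    by (simp only: t)
  also have "\<dots> = (r^2 + s^2) * (qf C n a + qf C n b)"
    unfolding qf_def by (simp only: sum.distrib sum_distrib_left distrib_left)
  finally show ?thesis .
qed

lemma qf_nonneg: assumes posC: "\<And>x. (\<exists>i<n. x i \<noteq> 0) \<Longrightarrow> qf C n x > 0"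
  shows "qf C n x \<ge> 0"
  using posC[of x] qf_zero[of n x C] by (cases "\<exists>i<n. x i \<noteq> 0") auto

lemma eig_lt1:
  fixes R C :: "real mat"
  assumes R: "R \<in> carrier_mat n n"
    and posC: "\<And>x. (\<exists>i<n. x i \<noteq> 0) \<Longrightarrow> qf C n x > 0"
    and en: "\<And>x. (\<exists>i<n. x i \<noteq> 0) \<Longrightarrow> qf C n (mv R n x) < qf C n x"
    and ev: "eigenvalue (map_mat complex_of_real R) l"
  shows "cmod l < 1"
proof -
  let ?Rc = "map_mat complex_of_real R"
  obtain v where evv: "eigenvector ?Rc v l" using ev unfolding eigenvalue_def by auto
  then have v: "v \<in> carrier_vec n" "v \<noteq> 0\<^sub>v n" "?Rc *\<^sub>v v = l \<cdot>\<^sub>v v"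
    using R unfolding eigenvector_def by auto
  define a where "a = (\<lambda>i. Re (v $ i))"
  define b where "b = (\<lambda>i. Im (v $ i))"
  have comp: "(\<Sum>j<n. complex_of_real (R $$ (i,j)) * v $ j) = l * v $ i" if "i < n" for i
  proof -
    have "(?Rc *\<^sub>v v) $ i = l * v $ i" using v that by simp
    moreover have "(?Rc *\<^sub>v v) $ i = (\<Sum>j<n. complex_of_real (R $$ (i,j)) * v $ j)"
      using R v(1) that by (auto simp: scalar_prod_def atLeast0LessThan intro!: sum.cong)
    ultimately show ?thesis by simp
  qed
  have ma: "mv R n a i = Re l * a i - Im l * b i" if "i < n" for i
    using arg_cong[OF comp[OF that], of Re] unfolding mv_def a_def b_def
    by (simp add: Re_sum)
  have mb: "mv R n b i = Im l * a i + Re l * b i" if "i < n" for i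
    using arg_cong[OF comp[OF that], of Im] unfolding mv_def a_def b_def
    by (simp add: Im_sum algebra_simps)
  have le: "qf C n (mv R n x) \<le> qf C n x" for x
  proof (cases "\<exists>i<n. x i \<noteq> 0")
    case True then show ?thesis using en[OF True] by simp
  next
    case False
    then have "qf C n (mv R n x) = 0" "qf C n x = 0"
      using qf_zero[of n x C] qf_zero[of n "mv R n x" C] mv_zero[of n x R] by auto
    then show ?thesis by simp
  qed
  have rot: "qf C n (mv R n a) + qf C n (mv R n b) = (cmod l)^2 * (qf C n a + qf C n b)"
  proof -
    have "qf C n (mv R n a) = qf C n (\<lambda>i. Re l * a i - Im l * b i)" by (rule qf_cong) (simp add: ma)
    moreover have "qf C n (mv R n b) = qf C n (\<lambda>i. Im l * a i + Re l * b i)" by (rule qf_cong) (simp add: mb)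
    ultimately show ?thesis using qf_rot[of C n "Re l" a "Im l" b] by (simp add: cmod_power2)
  qed
  from v(1,2) obtain i where i: "i < n" "v $ i \<noteq> 0" by (auto simp: vec_eq_iff)
  then have "a i \<noteq> 0 \<or> b i \<noteq> 0" unfolding a_def b_def by (simp add: complex_eq_iff)
  have nn: "qf C n x \<ge> 0" for x
    using posC[of x] qf_zero[of n x C] by (cases "\<exists>i<n. x i \<noteq> 0") auto
  from \<open>a i \<noteq> 0 \<or> b i \<noteq> 0\<close> have strict: "qf C n (mv R n a) + qf C n (mv R n b) < qf C n a + qf C n b \<and> qf C n a + qf C n b > 0"
  proof
    assume "a i \<noteq> 0"
    then have "\<exists>i<n. a i \<noteq> 0" using i by auto
    then have "qf C n (mv R n a) < qf C n a" "qf C n a > 0" using en posC by auto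
    then show ?thesis using le[of b] nn[of b] by linarith
  next
    assume "b i \<noteq> 0"
    then have "\<exists>i<n. b i \<noteq> 0" using i by auto
    then have "qf C n (mv R n b) < qf C n b" "qf C n b > 0" using en posC by auto
    then show ?thesis using le[of a] nn[of a] by linarith
  qed
  then have "(cmod l)^2 * (qf C n a + qf C n b) < 1 * (qf C n a + qf C n b)" using rot by simp
  then have "(cmod l)^2 < 1" by (rule mult_right_less_imp_less) (use strict in simp)
  then show ?thesis by (simp add: power_less_one_iff abs_square_less_1)
qed

lemma pow_scaled: fixes R :: "real mat" assumes R: "R \<in> carrier_mat n n"
  shows "(complex_of_real c \<cdot>\<^sub>m map_mat complex_of_real R) ^\<^sub>m k
    = (complex_of_real c ^ k) \<cdot>\<^sub>m map_mat complex_of_real (R ^\<^sub>m k)"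
proof (induction k)
  case 0 show ?case by (rule eq_matI) auto
next
  case (Suc k)
  have Rk: "R ^\<^sub>m k \<in> carrier_mat n n" using R by simp
  have "(complex_of_real c \<cdot>\<^sub>m map_mat complex_of_real R) ^\<^sub>m Suc k
     = ((complex_of_real c ^ k) \<cdot>\<^sub>m map_mat complex_of_real (R ^\<^sub>m k)) * (complex_of_real c \<cdot>\<^sub>m map_mat complex_of_real R)"
    using Suc by simp
  also have "\<dots> = (complex_of_real c ^ Suc k) \<cdot>\<^sub>m (map_mat complex_of_real (R ^\<^sub>m k) * map_mat complex_of_real R)"
  proof -
    let ?M = "map_mat complex_of_real (R ^\<^sub>m k)" and ?N = "map_mat complex_of_real R"
    have M: "?M \<in> carrier_mat n n" and N: "?N \<in> carrier_mat n n" using R Rk by auto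
    have "((complex_of_real c ^ k) \<cdot>\<^sub>m ?M) * (complex_of_real c \<cdot>\<^sub>m ?N)
        = (complex_of_real c ^ k) \<cdot>\<^sub>m (?M * (complex_of_real c \<cdot>\<^sub>m ?N))"
      by (rule mult_smult_assoc_mat[OF M, where nc=n]) (rule smult_carrier_mat[OF N])
    also have "?M * (complex_of_real c \<cdot>\<^sub>m ?N) = complex_of_real c \<cdot>\<^sub>m (?M * ?N)"
      by (rule mult_smult_distrib[OF M N])
    finally show ?thesis by (auto intro!: eq_matI)
  qed
  also have "map_mat complex_of_real (R ^\<^sub>m k) * map_mat complex_of_real R = map_mat complex_of_real (R ^\<^sub>m Suc k)"
    by (metis of_real_hom.mat_hom_mult[OF Rk R] pow_mat.simps(2))
  finally show ?case .
qed


lemma conv_from_energy: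
  fixes R C :: "real mat"
  assumes R: "R \<in> carrier_mat n n"
    and posC: "\<And>x. (\<exists>i<n. x i \<noteq> 0) \<Longrightarrow> qf C n x > 0"
    and en: "\<And>x. (\<exists>i<n. x i \<noteq> 0) \<Longrightarrow> qf C n (mv R n x) < qf C n x"
    and ij: "i < n" "j < n"
  shows "(\<lambda>k. (R ^\<^sub>m k) $$ (i,j)) \<longlonglongrightarrow> 0"
proof -
  have n: "n > 0" using ij by auto
  let ?Rc = "map_mat complex_of_real R"
  have Rc: "?Rc \<in> carrier_mat n n" using R by simp
  define \<rho> where "\<rho> = spectral_radius ?Rc"
  from spectral_radius_mem_max(1)[OF Rc n] obtain l where l: "l \<in> spectrum ?Rc" "\<rho> = cmod l"
    unfolding \<rho>_def by auto
  have \<rho>1: "\<rho> < 1" using eig_lt1[OF R posC en, of l] l unfolding spectrum_def by auto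
  have \<rho>0: "0 \<le> \<rho>" using l by simp
  define c where "c = 2 / (1 + \<rho>)"
  have c1: "c > 1" using \<rho>1 \<rho>0 unfolding c_def by (simp add: field_simps)
  have c\<rho>: "c * \<rho> < 1" using \<rho>1 \<rho>0 unfolding c_def by (simp add: field_simps)
  let ?Rc' = "complex_of_real c \<cdot>\<^sub>m ?Rc"
  have Rc': "?Rc' \<in> carrier_mat n n" using Rc by simp
  have sr: "spectral_radius ?Rc' < 1"
  proof -
    from spectral_radius_mem_max(1)[OF Rc' n] obtain m where m: "m \<in> spectrum ?Rc'"
      "spectral_radius ?Rc' = cmod m" by auto
    from m(1) obtain v where v: "eigenvector ?Rc' v m" unfolding spectrum_def eigenvalue_def by auto
    then have vc: "v \<in> carrier_vec n" "v \<noteq> 0\<^sub>v n" "?Rc' *\<^sub>v v = m \<cdot>\<^sub>v v"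
      using R unfolding eigenvector_def by auto
    have "?Rc *\<^sub>v v = (m / complex_of_real c) \<cdot>\<^sub>v v"
    proof (rule eq_vecI)
      fix k assume k: "k < dim_vec (m / complex_of_real c \<cdot>\<^sub>v v)"
      then have kn: "k < n" using vc by simp
      have "(?Rc' *\<^sub>v v) $ k = complex_of_real c * (?Rc *\<^sub>v v) $ k"
        using kn R vc(1) by (simp add: scalar_prod_def sum_distrib_left mult.assoc)
      then have "complex_of_real c * (?Rc *\<^sub>v v) $ k = m * v $ k" using vc(3) kn vc(1) by simp
      then show "(?Rc *\<^sub>v v) $ k = (m / complex_of_real c \<cdot>\<^sub>v v) $ k"
        using c1 kn vc(1) by (simp add: field_simps)
    qed (use R vc in simp)
    then have "eigenvector ?Rc v (m / complex_of_real c)" using vc R unfolding eigenvector_def by simp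
    then have "cmod (m / complex_of_real c) \<in> cmod ` spectrum ?Rc"
      unfolding spectrum_def eigenvalue_def by auto
    from spectral_radius_mem_max(2)[OF Rc n this]
    have "cmod m / c \<le> \<rho>" unfolding \<rho>_def using c1 by (simp add: norm_divide)
    then have "cmod m \<le> c * \<rho>" using c1 by (simp add: field_simps)
    then show ?thesis using m c\<rho> by simp
  qed
  from spectral_radius_jnf_norm_bound_less_1_upper_triangular[OF Rc' sr]
  obtain B where B: "\<And>k. norm_bound (?Rc' ^\<^sub>m k) B" by auto
  have bnd: "norm ((R ^\<^sub>m k) $$ (i,j)) \<le> norm ((1/c)^k) * B" for k
  proof -
    have "norm ((?Rc' ^\<^sub>m k) $$ (i,j)) \<le> B" using B[of k] ij Rc' R unfolding norm_bound_def by simp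
    moreover have "(?Rc' ^\<^sub>m k) $$ (i,j) = complex_of_real (c^k * (R ^\<^sub>m k) $$ (i,j))"
      unfolding pow_scaled[OF R] using ij R by simp
    moreover have "cmod (complex_of_real (c^k * (R ^\<^sub>m k) $$ (i,j))) = c^k * \<bar>(R ^\<^sub>m k) $$ (i,j)\<bar>"
      using c1 by (simp only: norm_of_real abs_mult) simp
    ultimately have "c^k * \<bar>(R ^\<^sub>m k) $$ (i,j)\<bar> \<le> B" by metis
    then show ?thesis using c1 by (simp add: field_simps power_divide)
  qed
  have "(\<lambda>k. (1/c)^k) \<longlonglongrightarrow> 0" by (rule LIMSEQ_power_zero) (use c1 in simp)
  then show ?thesis by (rule tendsto_0_le) (use bnd in \<open>auto intro: always_eventually\<close>)
qed


definition TF :: "(int \<Rightarrow> real) \<Rightarrow> int \<Rightarrow> (int \<Rightarrow> real) \<Rightarrow> real" where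
  "TF K N X = (\<Sum>i\<in>{0..N}. \<Sum>j\<in>{0..N}. K (i - j) * X i * X j)"

definition supp :: "int \<Rightarrow> (int \<Rightarrow> real) \<Rightarrow> bool" where
  "supp N X \<longleftrightarrow> (\<forall>i. i < 0 \<or> N < i \<longrightarrow> X i = 0)"

lemma TF_lin: "TF (\<lambda>k. a * K1 k + b * K2 k) N X = a * TF K1 N X + b * TF K2 N X"
proof -
  have "TF (\<lambda>k. a * K1 k + b * K2 k) N X =
     (\<Sum>i\<in>{0..N}. \<Sum>j\<in>{0..N}. a * (K1 (i - j) * X i * X j) + b * (K2 (i - j) * X i * X j))"
    unfolding TF_def by (intro sum.cong refl) (simp add: distrib_right mult.assoc)
  also have "\<dots> = a * TF K1 N X + b * TF K2 N X"
    unfolding TF_def by (simp only: sum.distrib sum_distrib_left)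
  finally show ?thesis .
qed

lemma TF_sum: assumes "finite M"
  shows "TF (\<lambda>k. \<Sum>m\<in>M. c m * K m k) N X = (\<Sum>m\<in>M. c m * TF (K m) N X)"
proof -
  have "TF (\<lambda>k. \<Sum>m\<in>M. c m * K m k) N X = (\<Sum>i\<in>{0..N}. \<Sum>j\<in>{0..N}. \<Sum>m\<in>M. c m * (K m (i - j) * X i * X j))"
    unfolding TF_def by (intro sum.cong refl) (simp add: sum_distrib_right mult.assoc)
  also have "\<dots> = (\<Sum>m\<in>M. \<Sum>i\<in>{0..N}. \<Sum>j\<in>{0..N}. c m * (K m (i - j) * X i * X j))"
    by (subst sum.swap) (subst (2) sum.swap, rule refl)
  also have "\<dots> = (\<Sum>m\<in>M. c m * TF (K m) N X)"
    unfolding TF_def by (simp only: sum_distrib_left)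
  finally show ?thesis .
qed

lemma TF_swap: "TF K N X = TF (\<lambda>k. K (- k)) N X"
  unfolding TF_def by (subst sum.swap) (intro sum.cong refl, simp add: mult.commute mult.left_commute)

lemma TF_sym: "TF K N X = TF (\<lambda>k. (K k + K (-k)) / 2) N X"
proof -
  have "TF (\<lambda>k. (K k + K (-k)) / 2) N X = TF (\<lambda>k. (1/2) * K k + (1/2) * K (-k)) N X"
    by (simp add: add_divide_distrib)
  also have "\<dots> = (1/2) * TF K N X + (1/2) * TF (\<lambda>k. K (-k)) N X" by (rule TF_lin)
  finally show ?thesis using TF_swap[of K N X] by simp
qed

lemma TF_delta: assumes "supp N X"
  shows "TF (\<lambda>k. if k = d then 1 else 0) N X = (\<Sum>i\<in>{0..N}. X i * X (i - d))"
proof -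
  have "TF (\<lambda>k. if k = d then 1 else 0) N X = (\<Sum>i\<in>{0..N}. \<Sum>j\<in>{0..N}. if j = i - d then X i * X j else 0)"
    unfolding TF_def by (intro sum.cong refl) auto
  also have "\<dots> = (\<Sum>i\<in>{0..N}. if i - d \<in> {0..N} then X i * X (i - d) else 0)"
    by (intro sum.cong refl) (simp only: sum.delta[OF finite_atLeastAtMost])
  also have "\<dots> = (\<Sum>i\<in>{0..N}. X i * X (i - d))"
    using assms unfolding supp_def by (intro sum.cong refl) auto
  finally show ?thesis .
qed

lemma shift_sum: fixes g :: "int \<Rightarrow> real" assumes "g (-1) = 0" "g N = 0" "0 \<le> N"
  shows "(\<Sum>j\<in>{0..N}. g (j - 1)) = (\<Sum>j\<in>{0..N}. g j)"
proof -
  have "(\<Sum>j\<in>{0..N}. g (j - 1)) = (\<Sum>j\<in>{-1..N-1}. g j)"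
    by (rule sum.reindex_bij_witness[where i="\<lambda>j. j+1" and j="\<lambda>j. j - 1"]) auto
  also have "\<dots> = g (-1) + (\<Sum>j\<in>{0..N-1}. g j)"
  proof -
    have "{-1..N-1} = insert (-1) {0..N-1}" using assms by auto
    then show ?thesis using assms by simp
  qed
  also have "\<dots> = (\<Sum>j\<in>{0..N-1}. g j) + g N" using assms by simp
  also have "\<dots> = (\<Sum>j\<in>{0..N}. g j)"
  proof -
    have "{0..N} = insert N {0..N-1}" using assms by auto
    then show ?thesis by simp
  qed
  finally show ?thesis .
qed

definition ext :: "nat \<Rightarrow> (nat \<Rightarrow> real) \<Rightarrow> int \<Rightarrow> real" where
  "ext n x i = (if 0 \<le> i \<and> i < int n then x (nat i) else 0)"

lemma sum_ext_int: fixes f :: "int \<Rightarrow> real"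
  assumes "int n \<le> N + 1" "\<And>i. i \<in> {0..N} \<Longrightarrow> \<not> i < int n \<Longrightarrow> f i = 0"
  shows "(\<Sum>i\<in>{0..N}. f i) = (\<Sum>i<n. f (int i))"
proof -
  have "(\<Sum>i\<in>{0..N}. f i) = (\<Sum>i\<in>{0..<int n}. f i)"
    using assms by (intro sum.mono_neutral_right) auto
  also have "{0..<int n} = int ` {..<n}" by (simp add: image_int_atLeastLessThan[of 0 n, simplified] lessThan_atLeast0)
  also have "(\<Sum>i\<in>int ` {..<n}. f i) = (\<Sum>i<n. f (int i))"
    using sum.reindex[of int "{..<n}" f] by (simp add: inj_on_def)
  finally show ?thesis .
qed


lemma qf_TF: assumes K: "\<And>i j. i < n \<Longrightarrow> j < n \<Longrightarrow> M $$ (i,j) = K (int i - int j)"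
  and N: "int n \<le> N"
  shows "qf M n x = TF K N (ext n x)"
proof -
  have inner: "(\<Sum>j\<in>{0..N}. K (i - j) * ext n x i * ext n x j) = (\<Sum>j<n. K (i - int j) * ext n x i * x j)" for i
  proof -
    have "(\<Sum>j\<in>{0..N}. K (i - j) * ext n x i * ext n x j) = (\<Sum>j<n. K (i - int j) * ext n x i * ext n x (int j))"
      by (rule sum_ext_int) (use N in \<open>auto simp: ext_def\<close>)
    also have "\<dots> = (\<Sum>j<n. K (i - int j) * ext n x i * x j)"
      by (intro sum.cong refl) (simp add: ext_def)
    finally show ?thesis .
  qed
  have "TF K N (ext n x) = (\<Sum>i\<in>{0..N}. \<Sum>j<n. K (i - int j) * ext n x i * x j)"
    unfolding TF_def by (simp only: inner)
  also have "\<dots> = (\<Sum>i<n. \<Sum>j<n. K (int i - int j) * ext n x (int i) * x j)"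
    by (rule sum_ext_int) (use N in \<open>auto simp: ext_def\<close>)
  also have "\<dots> = qf M n x"
    unfolding qf_def by (intro sum.cong refl) (simp add: ext_def K)
  finally show ?thesis by simp
qed

lemma supp_ext: "supp (int n - 1) (ext n x)"
  unfolding supp_def ext_def by auto

lemma supp_mono: "supp N X \<Longrightarrow> N \<le> M \<Longrightarrow> supp M X"
  unfolding supp_def by auto

lemma zero_chain: fixes X :: "int \<Rightarrow> real" and N :: int assumes "X (-1) = 0" "\<And>i. 0 \<le> i \<Longrightarrow> i \<le> N \<Longrightarrow> X i = \<sigma> * X (i - 1)"
  shows "0 \<le> i \<Longrightarrow> i \<le> N \<Longrightarrow> X i = 0"
proof -
  have "int k \<le> N \<Longrightarrow> X (int k) = 0" for k
  proof (induction k)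
    case 0 then show ?case using assms(2)[of 0] assms(1) by simp
  next
    case (Suc k)
    then have "X (int k) = 0" by simp
    then show ?case using assms(2)[of "int (Suc k)"] Suc.prems by simp
  qed
  moreover assume "0 \<le> i" "i \<le> N"
  ultimately show "X i = 0" by (metis nonneg_int_cases)
qed

lemma ext_nonzero: assumes "\<exists>i<n. x i \<noteq> 0" shows "\<exists>i\<in>{0..int n - 1}. ext n x i \<noteq> 0"
proof -
  from assms obtain i where "i < n" "x i \<noteq> 0" by auto
  then show ?thesis by (intro bexI[of _ "int i"]) (auto simp: ext_def)
qed

definition tri :: "int \<Rightarrow> real" where
  "tri k = (if k = 0 then -2 else if k = 1 \<or> k = -1 then 1 else 0)"

definition dl :: "int \<Rightarrow> int \<Rightarrow> real" where "dl d k = (if k = d then 1 else 0)"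

lemma TF_C: assumes "supp (N - 1) X" "0 \<le> N"
  shows "TF (\<lambda>k. dl 0 k + c * tri k) N X
     = (1 - 4*c) * (\<Sum>i\<in>{0..N}. X i * X i) + c * (\<Sum>i\<in>{0..N}. (X i + X (i - 1))^2)"
proof -
  have s: "supp N X" using assms supp_mono by force
  have k: "(\<lambda>k. dl 0 k + c * tri k) = (\<lambda>k. (1 - 2*c) * dl 0 k + c * (dl 1 k + dl (-1) k))"
    by (auto simp: dl_def tri_def fun_eq_iff)
  have "TF (\<lambda>k. dl 0 k + c * tri k) N X = (1 - 2*c) * TF (dl 0) N X + c * TF (\<lambda>k. 1 * dl 1 k + 1 * dl (-1) k) N X"
    unfolding k using TF_lin[of "1 - 2*c" "dl 0" c "\<lambda>k. 1 * dl 1 k + 1 * dl (-1) k" N X] by simp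
  also have "TF (\<lambda>k. 1 * dl 1 k + 1 * dl (-1) k) N X = TF (dl 1) N X + TF (dl (-1)) N X"
    using TF_lin[of 1 "dl 1" 1 "dl (-1)" N X] by simp
  also have "TF (dl (-1)) N X = TF (dl 1) N X"
  proof -
    have "(\<lambda>k. dl (-1) (-k)) = dl 1" by (auto simp: dl_def fun_eq_iff)
    then show ?thesis by (subst TF_swap) simp
  qed
  also have "TF (dl 0) N X = (\<Sum>i\<in>{0..N}. X i * X i)"
    using TF_delta[OF s, of 0] unfolding dl_def by simp
  also have "TF (dl 1) N X = (\<Sum>i\<in>{0..N}. X i * X (i - 1))"
    using TF_delta[OF s, of 1] unfolding dl_def by simp
  also have "(\<Sum>i\<in>{0..N}. (X i + X (i - 1))^2) = 2 * (\<Sum>i\<in>{0..N}. X i * X i) + 2 * (\<Sum>i\<in>{0..N}. X i * X (i - 1))"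
  proof -
    have "(\<Sum>i\<in>{0..N}. X (i - 1) * X (i - 1)) = (\<Sum>i\<in>{0..N}. X i * X i)"
      by (rule shift_sum[where g="\<lambda>i. X i * X i"]) (use assms in \<open>auto simp: supp_def\<close>)
    moreover have "(\<Sum>i\<in>{0..N}. (X i + X (i - 1))^2) = (\<Sum>i\<in>{0..N}. X i * X i) + (\<Sum>i\<in>{0..N}. X (i - 1) * X (i - 1)) + 2 * (\<Sum>i\<in>{0..N}. X i * X (i - 1))"
      by (simp add: sum.distrib sum_distrib_left power2_eq_square algebra_simps)
    ultimately show ?thesis by simp
  qed
  ultimately show ?thesis by (simp add: algebra_simps)
qed

lemma TF_C_pos: assumes "supp (N - 1) X" "0 \<le> N" "0 \<le> c" "c \<le> 1/4" "\<exists>i\<in>{0..N}. X i \<noteq> 0"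
  shows "TF (\<lambda>k. dl 0 k + c * tri k) N X > 0"
proof -
  from assms(5) obtain i0 where i0: "i0 \<in> {0..N}" "X i0 \<noteq> 0" by auto
  have S0: "(\<Sum>i\<in>{0..N}. X i * X i) > 0"
  proof -
    have "(\<Sum>i\<in>{0..N}. X i * X i) \<ge> X i0 * X i0"
      using i0 by (intro member_le_sum) auto
    moreover have "X i0 * X i0 > 0" using i0 not_real_square_gt_zero by blast
    ultimately show ?thesis by linarith
  qed
  have S1: "(\<Sum>i\<in>{0..N}. (X i + X (i - 1))^2) \<ge> 0" by (intro sum_nonneg) simp
  show ?thesis
  proof (cases "c < 1/4")
    case True
    then have "(1 - 4*c) * (\<Sum>i\<in>{0..N}. X i * X i) > 0" using S0 by simp
    moreover have "c * (\<Sum>i\<in>{0..N}. (X i + X (i - 1))^2) \<ge> 0" using S1 assms(3) by simp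
    ultimately show ?thesis unfolding TF_C[OF assms(1,2)] by linarith
  next
    case False
    then have c: "c = 1/4" using assms by simp
    have "(\<Sum>i\<in>{0..N}. (X i + X (i - 1))^2) > 0"
    proof (rule ccontr)
      assume "\<not> ?thesis"
      then have z: "(\<Sum>i\<in>{0..N}. (X i + X (i - 1))^2) = 0" using S1 by simp
      have "\<forall>i\<in>{0..N}. (X i + X (i - 1))^2 = 0"
        using sum_nonneg_eq_0_iff[of "{0..N}" "\<lambda>i. (X i + X (i - 1))^2"] z by simp
      then have "\<And>i. 0 \<le> i \<Longrightarrow> i \<le> N \<Longrightarrow> X i = (-1) * X (i - 1)" by (fastforce simp: add_eq_0_iff2)
      from zero_chain[of X N "-1", OF _ this] i0 assms(1) show False unfolding supp_def by auto
    qed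
    then show ?thesis unfolding TF_C[OF assms(1,2)] c by simp
  qed
qed

lemma TF_diff: assumes "supp (N - 1) X" "0 \<le> N"
  shows "TF (\<lambda>k. B (k + 1) - 2 * B k + B (k - 1)) N X = - TF B N (\<lambda>i. X i - X (i - 1))"
proof -
  have X0: "X (-1) = 0" "X N = 0" using assms unfolding supp_def by auto
  define T1 where "T1 = (\<Sum>i\<in>{0..N}. \<Sum>j\<in>{0..N}. B (i - j) * X i * X j)"
  define T2 where "T2 = (\<Sum>i\<in>{0..N}. \<Sum>j\<in>{0..N}. B (i - j) * X i * X (j - 1))"
  define T3 where "T3 = (\<Sum>i\<in>{0..N}. \<Sum>j\<in>{0..N}. B (i - j) * X (i - 1) * X j)"
  define T4 where "T4 = (\<Sum>i\<in>{0..N}. \<Sum>j\<in>{0..N}. B (i - j) * X (i - 1) * X (j - 1))"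
  have e: "TF B N (\<lambda>i. X i - X (i - 1)) = T1 - T2 - T3 + T4"
  proof -
    have t: "B (i - j) * (X i - X (i - 1)) * (X j - X (j - 1)) =
      B (i - j) * X i * X j - B (i - j) * X i * X (j - 1) - B (i - j) * X (i - 1) * X j + B (i - j) * X (i - 1) * X (j - 1)" for i j
      by (simp add: algebra_simps)
    show ?thesis unfolding TF_def T1_def T2_def T3_def T4_def t
      by (simp only: sum.distrib sum_subtractf)
  qed
  have T2: "T2 = TF (\<lambda>k. B (k - 1)) N X"
    unfolding T2_def TF_def
  proof (rule sum.cong[OF refl])
    fix i
    show "(\<Sum>j\<in>{0..N}. B (i - j) * X i * X (j - 1)) = (\<Sum>j\<in>{0..N}. B (i - j - 1) * X i * X j)"
      using shift_sum[where g="\<lambda>j. B (i - j - 1) * X i * X j", OF _ _ assms(2)] X0 by simp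
  qed
  have T3: "T3 = TF (\<lambda>k. B (k + 1)) N X"
  proof -
    have "T3 = (\<Sum>i\<in>{0..N}. (\<lambda>i. \<Sum>j\<in>{0..N}. B (i + 1 - j) * X i * X j) (i - 1))"
      unfolding T3_def by simp
    also have "\<dots> = (\<Sum>i\<in>{0..N}. \<Sum>j\<in>{0..N}. B (i + 1 - j) * X i * X j)"
      by (rule shift_sum) (use X0 assms(2) in auto)
    finally show ?thesis unfolding TF_def by (simp add: algebra_simps)
  qed
  have T4: "T4 = T1"
  proof -
    have a: "T4 = (\<Sum>i\<in>{0..N}. \<Sum>j\<in>{0..N}. B (i - 1 - j) * X (i - 1) * X j)"
      unfolding T4_def
    proof (rule sum.cong[OF refl])
      fix i
      show "(\<Sum>j\<in>{0..N}. B (i - j) * X (i - 1) * X (j - 1)) = (\<Sum>j\<in>{0..N}. B (i - 1 - j) * X (i - 1) * X j)"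
        using shift_sum[where g="\<lambda>j. B (i - 1 - j) * X (i - 1) * X j", OF _ _ assms(2)] X0 by simp
    qed
    have b: "(\<Sum>i\<in>{0..N}. (\<lambda>i. \<Sum>j\<in>{0..N}. B (i - j) * X i * X j) (i - 1)) = (\<Sum>i\<in>{0..N}. \<Sum>j\<in>{0..N}. B (i - j) * X i * X j)"
      by (rule shift_sum) (use X0 assms(2) in auto)
    show ?thesis unfolding T1_def a using b by simp
  qed
  have L: "TF (\<lambda>k. B (k + 1) - 2 * B k + B (k - 1)) N X = TF (\<lambda>k. B (k + 1)) N X - 2 * T1 + TF (\<lambda>k. B (k - 1)) N X"
    unfolding TF_def T1_def by (simp add: sum.distrib sum_subtractf sum_distrib_left algebra_simps)
  show ?thesis unfolding L e T2 T3 T4 by simp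
qed


definition tent :: "nat \<Rightarrow> int \<Rightarrow> real" where
  "tent m k = real (Suc m - nat \<bar>k\<bar>)"

lemma TF_cong: "(\<And>k. \<bar>k\<bar> \<le> N \<Longrightarrow> K1 k = K2 k) \<Longrightarrow> TF K1 N X = TF K2 N X"
  unfolding TF_def by (intro sum.cong refl) auto

lemma card_window: fixes i j N :: int assumes "i \<in> {0..N}" "j \<in> {0..N}"
  shows "(\<Sum>l\<in>{- int m..N}. (if l \<le> i \<and> i \<le> l + int m then 1 else 0) * (if l \<le> j \<and> j \<le> l + int m then 1 else 0)) = tent m (i - j)"
proof -
  have "(\<Sum>l\<in>{- int m..N}. (if l \<le> i \<and> i \<le> l + int m then 1 else 0) * (if l \<le> j \<and> j \<le> l + int m then (1::real) else 0))
      = (\<Sum>l\<in>{- int m..N}. if l \<le> i \<and> i \<le> l + int m \<and> l \<le> j \<and> j \<le> l + int m then 1 else 0)"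
    by (intro sum.cong refl) auto
  also have "\<dots> = real (card {l\<in>{- int m..N}. l \<le> i \<and> i \<le> l + int m \<and> l \<le> j \<and> j \<le> l + int m})"
    by (simp add: sum.inter_filter[symmetric])
  also have "{l\<in>{- int m..N}. l \<le> i \<and> i \<le> l + int m \<and> l \<le> j \<and> j \<le> l + int m} = {max i j - int m .. min i j}"
    using assms by auto
  also have "real (card {max i j - int m .. min i j}) = tent m (i - j)"
    unfolding tent_def card_atLeastAtMost_int by (cases "i \<le> j") (auto simp: nat_diff_distrib')
  finally show ?thesis .
qed

lemma TF_window: "TF (tent m) N Y = (\<Sum>l\<in>{- int m..N}. (\<Sum>i\<in>{0..N}. (if l \<le> i \<and> i \<le> l + int m then 1 else 0) * Y i)^2)"
proof -
  let ?I = "\<lambda>l i. (if l \<le> i \<and> i \<le> l + int m then (1::real) else 0)"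
  have "(\<Sum>l\<in>{- int m..N}. (\<Sum>i\<in>{0..N}. ?I l i * Y i)^2)
      = (\<Sum>l\<in>{- int m..N}. \<Sum>i\<in>{0..N}. \<Sum>j\<in>{0..N}. (?I l i * ?I l j) * Y i * Y j)"
    by (simp add: power2_eq_square sum_product mult.commute mult.left_commute)
  also have "\<dots> = (\<Sum>i\<in>{0..N}. \<Sum>j\<in>{0..N}. \<Sum>l\<in>{- int m..N}. (?I l i * ?I l j) * Y i * Y j)"
    by (subst sum.swap) (subst (2) sum.swap, rule refl)
  also have "\<dots> = (\<Sum>i\<in>{0..N}. \<Sum>j\<in>{0..N}. tent m (i - j) * Y i * Y j)"
  proof (rule sum.cong[OF refl], rule sum.cong[OF refl])
    fix i j assume "i \<in> {0..N}" "j \<in> {0..N}"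
    then show "(\<Sum>l\<in>{- int m..N}. (?I l i * ?I l j) * Y i * Y j) = tent m (i - j) * Y i * Y j"
      using card_window[of i N j m] by (simp add: sum_distrib_right[symmetric])
  qed
  finally show ?thesis unfolding TF_def by simp
qed

lemma TF_tent_nonneg: "TF (tent m) N Y \<ge> 0"
  unfolding TF_window by (intro sum_nonneg) simp

lemma TF_one: "TF (\<lambda>k. 1) N Y \<ge> 0"
proof -
  have "TF (\<lambda>k. 1) N Y = (\<Sum>i\<in>{0..N}. Y i) * (\<Sum>i\<in>{0..N}. Y i)"
    unfolding TF_def by (simp add: sum_product)
  then show ?thesis by simp
qed

lemma TF_tent0: assumes "supp N Y" shows "TF (tent 0) N Y = (\<Sum>i\<in>{0..N}. Y i * Y i)"
proof -
  have "tent 0 = dl 0" by (auto simp: tent_def dl_def fun_eq_iff)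
  then show ?thesis using TF_delta[OF assms, of 0] unfolding dl_def by simp
qed

lemma TF_tent1: assumes "supp (N - 1) Y" "0 \<le> N" shows "TF (tent 1) N Y \<le> 4 * (\<Sum>i\<in>{0..N}. Y i * Y i)"
proof -
  have s: "supp N Y" using assms supp_mono by force
  have k: "tent 1 = (\<lambda>k. 2 * dl 0 k + 1 * (\<lambda>k. 1 * dl 1 k + 1 * dl (-1) k) k)"
    by (auto simp: tent_def dl_def fun_eq_iff)
  have "TF (tent 1) N Y = 2 * TF (dl 0) N Y + 1 * TF (\<lambda>k. 1 * dl 1 k + 1 * dl (-1) k) N Y"
    unfolding k by (rule TF_lin)
  also have "TF (\<lambda>k. 1 * dl 1 k + 1 * dl (-1) k) N Y = 1 * TF (dl 1) N Y + 1 * TF (dl (-1)) N Y"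
    by (rule TF_lin)
  also have "TF (dl (-1)) N Y = TF (dl 1) N Y"
  proof -
    have "(\<lambda>k. dl (-1) (-k)) = dl 1" by (auto simp: dl_def fun_eq_iff)
    then show ?thesis by (subst TF_swap) simp
  qed
  also have "TF (dl 0) N Y = (\<Sum>i\<in>{0..N}. Y i * Y i)"
    using TF_delta[OF s, of 0] unfolding dl_def by simp
  also have "TF (dl 1) N Y = (\<Sum>i\<in>{0..N}. Y i * Y (i - 1))"
    using TF_delta[OF s, of 1] unfolding dl_def by simp
  finally have e: "TF (tent 1) N Y = 2 * (\<Sum>i\<in>{0..N}. Y i * Y i) + 2 * (\<Sum>i\<in>{0..N}. Y i * Y (i - 1))" by simp
  have sh: "(\<Sum>i\<in>{0..N}. Y (i - 1) * Y (i - 1)) = (\<Sum>i\<in>{0..N}. Y i * Y i)"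
    by (rule shift_sum[where g="\<lambda>i. Y i * Y i"]) (use assms in \<open>auto simp: supp_def\<close>)
  have "0 \<le> (\<Sum>i\<in>{0..N}. (Y i - Y (i - 1))^2)" by (intro sum_nonneg) simp
  also have "\<dots> = (\<Sum>i\<in>{0..N}. Y i * Y i) + (\<Sum>i\<in>{0..N}. Y (i - 1) * Y (i - 1)) - 2 * (\<Sum>i\<in>{0..N}. Y i * Y (i - 1))"
    by (simp add: sum.distrib sum_subtractf sum_distrib_left power2_eq_square algebra_simps)
  finally show ?thesis using e sh by simp
qed

definition d2 :: "(nat \<Rightarrow> real) \<Rightarrow> nat \<Rightarrow> real" where
  "d2 H m = H m - 2 * H (Suc m) + H (Suc (Suc m))"

lemma H_decomp: "d \<le> L \<Longrightarrow> H d = H (Suc L) + real (Suc L - d) * (H L - H (Suc L)) + (\<Sum>m<L. d2 H m * real (Suc m - d))"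
proof (induction L)
  case 0 then show ?case by simp
next
  case (Suc L)
  show ?case
  proof (cases "d = Suc L")
    case True
    have "(\<Sum>m<Suc L. d2 H m * real (Suc m - d)) = 0" using True by (intro sum.neutral) auto
    then show ?thesis using True by simp
  next
    case False
    then have dL: "d \<le> L" using Suc.prems by simp
    have IH: "H d = H (Suc L) + real (Suc L - d) * (H L - H (Suc L)) + (\<Sum>m<L. d2 H m * real (Suc m - d))"
      using Suc.IH[OF dL] .
    have r1: "real (Suc L - d) = real L + 1 - real d" using dL by (simp add: of_nat_diff)
    have r2: "real (Suc (Suc L) - d) = real L + 2 - real d" using dL by (simp add: of_nat_diff)
    show ?thesis unfolding sum.lessThan_Suc IH r1 r2 d2_def by (simp add: algebra_simps)
  qed
qed

lemma TF_H_lower: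
  fixes H :: "nat \<Rightarrow> real" and N :: int
  assumes Y: "supp (N - 1) Y" and N2: "2 \<le> N"
    and h1: "H (Suc (nat N)) \<ge> 0" and h2: "H (nat N) \<ge> H (Suc (nat N))"
    and h3: "\<And>m. 2 \<le> m \<Longrightarrow> d2 H m \<ge> 0"
  shows "TF (\<lambda>k. H (nat \<bar>k\<bar>)) N Y \<ge> (d2 H 0 + 4 * min (d2 H 1) 0) * (\<Sum>i\<in>{0..N}. Y i * Y i)"
proof -
  define L where "L = nat N"
  have L2: "2 \<le> L" using N2 unfolding L_def by simp
  have s: "supp N Y" using Y supp_mono by force
  define K where "K = (\<lambda>k. 1 * (\<Sum>m<L. d2 H m * tent m k) + 1 * (H (Suc L) * 1 + (H L - H (Suc L)) * tent L k))"
  have "TF (\<lambda>k. H (nat \<bar>k\<bar>)) N Y = TF K N Y"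
  proof (rule TF_cong)
    fix k :: int assume "\<bar>k\<bar> \<le> N"
    then have "nat \<bar>k\<bar> \<le> L" unfolding L_def by simp
    from H_decomp[OF this, of H] show "H (nat \<bar>k\<bar>) = K k" unfolding K_def tent_def by (simp add: algebra_simps)
  qed
  also have "TF K N Y = 1 * TF (\<lambda>k. \<Sum>m<L. d2 H m * tent m k) N Y + 1 * TF (\<lambda>k. H (Suc L) * 1 + (H L - H (Suc L)) * tent L k) N Y"
    unfolding K_def by (rule TF_lin)
  also have "TF (\<lambda>k. H (Suc L) * 1 + (H L - H (Suc L)) * tent L k) N Y = H (Suc L) * TF (\<lambda>k. 1) N Y + (H L - H (Suc L)) * TF (tent L) N Y"
    by (rule TF_lin)
  also have "TF (\<lambda>k. \<Sum>m<L. d2 H m * tent m k) N Y = (\<Sum>m<L. d2 H m * TF (tent m) N Y)"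
    by (rule TF_sum) simp
  finally have E: "TF (\<lambda>k. H (nat \<bar>k\<bar>)) N Y = (\<Sum>m<L. d2 H m * TF (tent m) N Y) + (H (Suc L) * TF (\<lambda>k. 1) N Y + (H L - H (Suc L)) * TF (tent L) N Y)"
    by simp
  have rest: "H (Suc L) * TF (\<lambda>k. 1) N Y + (H L - H (Suc L)) * TF (tent L) N Y \<ge> 0"
    using h1 h2 TF_one[of N Y] TF_tent_nonneg[of L N Y] unfolding L_def by simp
  have split: "(\<Sum>m<L. d2 H m * TF (tent m) N Y) = d2 H 0 * TF (tent 0) N Y + d2 H 1 * TF (tent 1) N Y + (\<Sum>m\<in>{2..<L}. d2 H m * TF (tent m) N Y)"
  proof -
    have "{..<L} = {0, 1} \<union> {2..<L}" using L2 by auto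
    then show ?thesis by (simp add: sum.union_disjoint)
  qed
  have tail: "(\<Sum>m\<in>{2..<L}. d2 H m * TF (tent m) N Y) \<ge> 0"
    using h3 TF_tent_nonneg by (intro sum_nonneg) (simp add: mult_nonneg_nonneg)
  have t1: "d2 H 1 * TF (tent 1) N Y \<ge> 4 * min (d2 H 1) 0 * (\<Sum>i\<in>{0..N}. Y i * Y i)"
  proof (cases "d2 H 1 \<ge> 0")
    case True then show ?thesis using TF_tent_nonneg[of 1 N Y]
      by (simp add: min_def sum_nonneg)
  next
    case False
    then have "d2 H 1 * TF (tent 1) N Y \<ge> d2 H 1 * (4 * (\<Sum>i\<in>{0..N}. Y i * Y i))"
      using TF_tent1[OF Y] N2 by (intro mult_left_mono_neg) auto
    then show ?thesis using False by (simp add: min_def)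
  qed
  show ?thesis unfolding E split TF_tent0[OF s] using rest tail t1 by (simp add: algebra_simps)
qed


definition Gzg :: "real \<Rightarrow> int \<Rightarrow> real" where
  "Gzg a k = (if k < 0 then 0 else gcoef a (nat k))"

lemma Gstep: "Gzg (a + 1) k = Gzg a k - Gzg a (k - 1)"
proof (cases "k < 0")
  case True then show ?thesis by (simp add: Gzg_def)
next
  case False
  show ?thesis
  proof (cases "k = 0")
    case True then show ?thesis by (simp add: Gzg_def gcoef_def)
  next
    case False
    with \<open>\<not> k < 0\<close> have "0 < k" by simp
    then obtain n where n: "k = int n" "0 < n" using pos_int_cases by blast
    then obtain j where j: "n = Suc j" using gr0_implies_Suc by blast
    have "gcoef (a + 1) (Suc j) = (-1)^Suc j * ((a gchoose j) + (a gchoose Suc j))"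
      unfolding gcoef_def gbinomial_Suc_Suc ..
    also have "\<dots> = gcoef a (Suc j) - gcoef a j" unfolding gcoef_def by (simp add: distrib_left)
    finally have e: "gcoef (a + 1) (Suc j) = gcoef a (Suc j) - gcoef a j" .
    have "nat k = Suc j" "nat (k - 1) = j" "\<not> k - 1 < 0" "\<not> k < 0" using n j by auto
    then show ?thesis unfolding Gzg_def using e by simp
  qed
qed

lemma G2: "Gzg g k = Gzg (g - 2) k - 2 * Gzg (g - 2) (k - 1) + Gzg (g - 2) (k - 2)"
proof -
  have "Gzg g k = Gzg (g - 1) k - Gzg (g - 1) (k - 1)" using Gstep[of "g - 1" k] by simp
  also have "Gzg (g - 1) k = Gzg (g - 2) k - Gzg (g - 2) (k - 1)" using Gstep[of "g - 2" k] by simp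
  also have "Gzg (g - 1) (k - 1) = Gzg (g - 2) (k - 1) - Gzg (g - 2) (k - 1 - 1)" using Gstep[of "g - 2" "k - 1"] by simp
  finally show ?thesis by (simp add: algebra_simps)
qed

definition Ez :: "real \<Rightarrow> int \<Rightarrow> real" where "Ez g k = Gzg (g - 2) k"

definition Bz :: "shift \<Rightarrow> real \<Rightarrow> int \<Rightarrow> real" where
  "Bz s g k = (case s of PQ_1_0 \<Rightarrow> g / 2 * Ez g k + (2 - g) / 2 * Ez g (k - 1)
     | PQ_1_m1 \<Rightarrow> (2 + g) / 4 * Ez g k + (2 - g) / 4 * Ez g (k - 2))"

definition Wz :: "shift \<Rightarrow> real \<Rightarrow> int \<Rightarrow> real" where
  "Wz s g k = (if k < 0 then 0 else wcoef s g (nat k))"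

lemma Wz_G: "Wz s g k = (case s of PQ_1_0 \<Rightarrow> g / 2 * Gzg g k + (2 - g) / 2 * Gzg g (k - 1)
     | PQ_1_m1 \<Rightarrow> (2 + g) / 4 * Gzg g k + (2 - g) / 4 * Gzg g (k - 2))"
proof (cases s)
  case PQ_1_0 then show ?thesis
    by (cases "k < 0"; cases "k = 0") (auto simp: Wz_def wcoef_def Gzg_def nat_diff_distrib')
next
  case PQ_1_m1 then show ?thesis
    by (cases "k < 0"; cases "k < 2") (auto simp: Wz_def wcoef_def Gzg_def nat_diff_distrib')
qed

lemma Wz_B: "Wz s g k = Bz s g k - 2 * Bz s g (k - 1) + Bz s g (k - 2)"
proof -
  have a: "Gzg g j = Ez g j - 2 * Ez g (j - 1) + Ez g (j - 2)" for j unfolding Ez_def by (rule G2)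
  show ?thesis
    by (cases s) (simp_all add: Wz_G Bz_def a algebra_simps)
qed

lemma Bz_neg: "k < 0 \<Longrightarrow> Bz s g k = 0"
  by (cases s) (auto simp: Bz_def Ez_def Gzg_def)

definition ee :: "real \<Rightarrow> nat \<Rightarrow> real" where "ee g k = gcoef (g - 2) k"

lemma Ez_nat: "Ez g (int k) = ee g k" by (simp add: Ez_def Gzg_def ee_def)

lemma ee0: "ee g 0 = 1" by (simp add: ee_def gcoef_def)

lemma ee_Suc: "(real k + 1) * ee g (Suc k) = ((2 - g) + real k) * ee g k"
proof -
  let ?a = "g - 2"
  define G0 where "G0 = ?a gchoose k"
  define G1 where "G1 = ?a gchoose Suc k"
  define s where "s = ((-1::real)^k)"
  have h: "(real k + 1) * G1 = (?a - real k) * G0"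
    using gbinomial_mult_1[of ?a k] unfolding G0_def G1_def by (simp add: algebra_simps)
  have e1: "ee g (Suc k) = - (s * G1)" unfolding ee_def gcoef_def G1_def s_def by simp
  have e0: "ee g k = s * G0" unfolding ee_def gcoef_def G0_def s_def by simp
  have "(real k + 1) * ee g (Suc k) = - (s * ((real k + 1) * G1))" unfolding e1 by (simp only: mult_minus_right mult.left_commute)
  also have "\<dots> = - (s * ((?a - real k) * G0))" unfolding h ..
  also have "\<dots> = ((2 - g) + real k) * ee g k" unfolding e0 by (simp add: algebra_simps)
  finally show ?thesis .
qed

context
  fixes g :: real assumes g1: "1 \<le> g" and g2: "g \<le> 2"
begin

lemma ee_nonneg: "ee g k \<ge> 0"
proof (induction k)
  case 0 then show ?case by (simp add: ee0)
next
  case (Suc k)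
  have "(real k + 1) * ee g (Suc k) \<ge> 0" unfolding ee_Suc using Suc g2 by simp
  then show ?case by (simp add: zero_le_mult_iff)
qed

lemma ee_dec: "ee g (Suc k) \<le> ee g k"
proof -
  have "(real k + 1) * ee g (Suc k) \<le> (real k + 1) * ee g k"
    unfolding ee_Suc using g1 ee_nonneg[of k] by (intro mult_right_mono) auto
  then show ?thesis by (smt (verit) mult_le_cancel_left_pos of_nat_0_le_iff)
qed

lemma ee_conv: "ee g k - 2 * ee g (Suc k) + ee g (Suc (Suc k)) \<ge> 0"
proof -
  define \<mu> where "\<mu> = 2 - g"
  have \<mu>: "0 \<le> \<mu>" "\<mu> \<le> 1" using g1 g2 unfolding \<mu>_def by auto
  define e0 where "e0 = ee g k"
  define e1 where "e1 = ee g (Suc k)"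
  define e2 where "e2 = ee g (Suc (Suc k))"
  define r where "r = real k"
  have h1: "(r + 1) * e1 = (\<mu> + r) * e0" unfolding e1_def e0_def r_def \<mu>_def by (rule ee_Suc)
  have h2: "(r + 2) * e2 = (\<mu> + r + 1) * e1"
    using ee_Suc[of "Suc k" g] unfolding e1_def e2_def r_def \<mu>_def by (simp add: algebra_simps)
  have e0n: "e0 \<ge> 0" unfolding e0_def by (rule ee_nonneg)
  have r0: "r \<ge> 0" unfolding r_def by simp
  have "(r + 1) * (r + 2) * (e0 - 2 * e1 + e2) = (r + 1) * (r + 2) * e0 - 2 * (r + 2) * ((r + 1) * e1) + (r + 1) * ((r + 2) * e2)"
    by (simp add: algebra_simps)
  also have "\<dots> = (r + 1) * (r + 2) * e0 - 2 * (r + 2) * ((r + 1) * e1) + (\<mu> + r + 1) * ((r + 1) * e1)"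
    unfolding h2 by (simp add: algebra_simps)
  also have "\<dots> = (r + 1) * (r + 2) * e0 - 2 * (r + 2) * ((\<mu> + r) * e0) + (\<mu> + r + 1) * ((\<mu> + r) * e0)"
    unfolding h1 ..
  also have "\<dots> = ((1 - \<mu>) * (2 - \<mu>)) * e0"
    by (simp add: algebra_simps)
  finally have "(r + 1) * (r + 2) * (e0 - 2 * e1 + e2) \<ge> 0" using \<mu> e0n by simp
  moreover have "(r + 1) * (r + 2) > 0" using r0 by simp
  ultimately have "e0 - 2 * e1 + e2 \<ge> 0" by (simp add: zero_le_mult_iff)
  then show ?thesis unfolding e0_def e1_def e2_def .
qed

lemma Ez_nonneg: "Ez g k \<ge> 0"
  using ee_nonneg by (cases "k < 0") (auto simp: Ez_def Gzg_def ee_def)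

lemma Ez_dec: assumes "0 \<le> k" shows "Ez g (k + 1) \<le> Ez g k"
proof -
  obtain j where j: "k = int j" using assms by (metis nonneg_int_cases)
  have "k + 1 = int (Suc j)" using j by simp
  then show ?thesis using ee_dec[of j] j by (simp only: Ez_nat)
qed

lemma Ez_conv: assumes "0 \<le> k" shows "Ez g k - 2 * Ez g (k + 1) + Ez g (k + 2) \<ge> 0"
proof -
  obtain j where j: "k = int j" using assms by (metis nonneg_int_cases)
  have "k + 1 = int (Suc j)" "k + 2 = int (Suc (Suc j))" using j by simp_all
  then show ?thesis using ee_conv[of j] j by (simp only: Ez_nat)
qed

end


definition Hn :: "shift \<Rightarrow> real \<Rightarrow> nat \<Rightarrow> real" where
  "Hn s g d = (if d = 0 then Bz s g 0 else Bz s g (int d) / 2)"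

lemma Amat_entry: assumes "i < m - 1" "j < m - 1"
  shows "Amat s g m $$ (i,j) = (\<lambda>k. Wz s g (k + 1)) (int i - int j)"
proof -
  have "j \<le> i + 1 \<Longrightarrow> nat (int i - int j + 1) = i + 1 - j" by arith
  then show ?thesis using assms unfolding Amat_def Wz_def by auto
qed

lemma Cmat_entry: assumes "i < m - 1" "j < m - 1"
  shows "Cmat s g m $$ (i,j) = (\<lambda>k. dl 0 k + ccoef s g * tri k) (int i - int j)"
  using assms unfolding Cmat_def tridiag_def dl_def tri_def by auto

context
  fixes g :: real assumes g1: "1 \<le> g" and g2: "g \<le> 2"
begin

lemma Bz_nonneg: "Bz s g k \<ge> 0"
  using Ez_nonneg[OF g1 g2] g1 g2 by (cases s) (auto simp: Bz_def intro!: add_nonneg_nonneg mult_nonneg_nonneg)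

lemma Bz_dec: assumes "2 \<le> k" shows "Bz s g (k + 1) \<le> Bz s g k"
proof (cases s)
  case PQ_1_0
  have "Ez g (k + 1) \<le> Ez g k" using assms by (intro Ez_dec[OF g1 g2]) simp
  moreover have "Ez g (k + 1 - 1) \<le> Ez g (k - 1)" using Ez_dec[OF g1 g2, of "k - 1"] assms by simp
  ultimately show ?thesis using PQ_1_0 g1 g2 unfolding Bz_def
    by (simp add: add_mono mult_left_mono)
next
  case PQ_1_m1
  have "Ez g (k + 1) \<le> Ez g k" using assms by (intro Ez_dec[OF g1 g2]) simp
  moreover have "Ez g (k + 1 - 2) \<le> Ez g (k - 2)" using Ez_dec[OF g1 g2, of "k - 2"] assms by simp
  ultimately show ?thesis using PQ_1_m1 g1 g2 unfolding Bz_def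
    by (simp add: add_mono mult_left_mono)
qed

lemma Bz_conv: assumes "2 \<le> k \<or> (s = PQ_1_0 \<and> 1 \<le> k)"
  shows "Bz s g k - 2 * Bz s g (k + 1) + Bz s g (k + 2) \<ge> 0"
proof (cases s)
  case PQ_1_0
  then have k: "1 \<le> k" using assms by auto
  have a: "Ez g k - 2 * Ez g (k + 1) + Ez g (k + 2) \<ge> 0" using k by (intro Ez_conv[OF g1 g2]) simp
  have b: "Ez g (k - 1) - 2 * Ez g (k + 1 - 1) + Ez g (k + 2 - 1) \<ge> 0"
    using Ez_conv[OF g1 g2, of "k - 1"] k by (simp add: algebra_simps)
  have "Bz s g k - 2 * Bz s g (k + 1) + Bz s g (k + 2)
      = g / 2 * (Ez g k - 2 * Ez g (k + 1) + Ez g (k + 2)) + (2 - g) / 2 * (Ez g (k - 1) - 2 * Ez g (k + 1 - 1) + Ez g (k + 2 - 1))"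
    using PQ_1_0 unfolding Bz_def by (simp add: algebra_simps)
  also have "\<dots> \<ge> 0" by (rule add_nonneg_nonneg; rule mult_nonneg_nonneg) (use a b g1 g2 in auto)
  finally show ?thesis .
next
  case PQ_1_m1
  then have k: "2 \<le> k" using assms by auto
  have a: "Ez g k - 2 * Ez g (k + 1) + Ez g (k + 2) \<ge> 0" using k by (intro Ez_conv[OF g1 g2]) simp
  have b: "Ez g (k - 2) - 2 * Ez g (k + 1 - 2) + Ez g (k + 2 - 2) \<ge> 0"
    using Ez_conv[OF g1 g2, of "k - 2"] k by (simp add: algebra_simps)
  have "Bz s g k - 2 * Bz s g (k + 1) + Bz s g (k + 2)
      = (2 + g) / 4 * (Ez g k - 2 * Ez g (k + 1) + Ez g (k + 2)) + (2 - g) / 4 * (Ez g (k - 2) - 2 * Ez g (k + 1 - 2) + Ez g (k + 2 - 2))"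
    using PQ_1_m1 unfolding Bz_def by (simp add: algebra_simps)
  also have "\<dots> \<ge> 0" by (rule add_nonneg_nonneg; rule mult_nonneg_nonneg) (use a b g1 g2 in auto)
  finally show ?thesis .
qed

lemma negA:
  assumes \<kappa>: "d2 (Hn s g) 0 + 4 * min (d2 (Hn s g) 1) 0 > 0"
    and x: "\<exists>i<m - 1. x i \<noteq> 0"
  shows "qf (Amat s g m) (m - 1) x < 0"
proof -
  define n where "n = m - 1"
  define N where "N = int n + 2"
  define X where "X = ext n x"
  define Y where "Y = (\<lambda>i. X i - X (i - 1))"
  have N: "int n \<le> N" "0 \<le> N" "2 \<le> N" unfolding N_def by auto
  have sX: "supp (N - 1) X" unfolding X_def using supp_ext[of n x] by (rule supp_mono) (simp add: N_def)
  have sY: "supp (N - 1) Y" using sX unfolding Y_def supp_def X_def ext_def N_def by auto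
  have "qf (Amat s g m) (m - 1) x = TF (\<lambda>k. Wz s g (k + 1)) N X"
    unfolding X_def n_def by (rule qf_TF) (use Amat_entry N in \<open>auto simp: n_def\<close>)
  also have "(\<lambda>k. Wz s g (k + 1)) = (\<lambda>k. Bz s g (k + 1) - 2 * Bz s g k + Bz s g (k - 1))"
    by (rule ext) (simp add: Wz_B algebra_simps)
  also have "TF (\<lambda>k. Bz s g (k + 1) - 2 * Bz s g k + Bz s g (k - 1)) N X = - TF (Bz s g) N Y"
    unfolding Y_def by (rule TF_diff[OF sX N(2)])
  also have "TF (Bz s g) N Y = TF (\<lambda>k. (Bz s g k + Bz s g (-k)) / 2) N Y" by (rule TF_sym)
  also have "(\<lambda>k. (Bz s g k + Bz s g (-k)) / 2) = (\<lambda>k. Hn s g (nat \<bar>k\<bar>))"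
  proof (rule ext)
    fix k :: int
    show "(Bz s g k + Bz s g (-k)) / 2 = Hn s g (nat \<bar>k\<bar>)"
      by (cases "k = 0"; cases "k < 0") (auto simp: Hn_def Bz_neg)
  qed
  finally have E: "qf (Amat s g m) (m - 1) x = - TF (\<lambda>k. Hn s g (nat \<bar>k\<bar>)) N Y" .
  define L where "L = nat N"
  have L2: "2 \<le> L" using N unfolding L_def by simp
  have low: "TF (\<lambda>k. Hn s g (nat \<bar>k\<bar>)) N Y \<ge> (d2 (Hn s g) 0 + 4 * min (d2 (Hn s g) 1) 0) * (\<Sum>i\<in>{0..N}. Y i * Y i)"
  proof (rule TF_H_lower[OF sY N(3)])
    show "Hn s g (Suc (nat N)) \<ge> 0" unfolding Hn_def using Bz_nonneg by simp
    show "Hn s g (nat N) \<ge> Hn s g (Suc (nat N))"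
      unfolding Hn_def using Bz_dec[of "int (nat N)" s] N by (simp add: add.commute)
    fix m :: nat assume "2 \<le> m"
    then show "d2 (Hn s g) m \<ge> 0" unfolding d2_def Hn_def
      using Bz_conv[of "int m" s] by (simp add: add_ac)
  qed
  have Ypos: "(\<Sum>i\<in>{0..N}. Y i * Y i) > 0"
  proof -
    have "\<exists>i\<in>{0..N}. Y i \<noteq> 0"
    proof (rule ccontr)
      assume "\<not> ?thesis"
      then have "\<And>i. 0 \<le> i \<Longrightarrow> i \<le> N \<Longrightarrow> X i = 1 * X (i - 1)" unfolding Y_def by auto
      from zero_chain[of X N 1, OF _ this] have z: "\<And>i. 0 \<le> i \<Longrightarrow> i \<le> N \<Longrightarrow> X i = 0"
        using sX unfolding supp_def by auto
      from x obtain i where "i < n" "x i \<noteq> 0" unfolding n_def by auto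
      then show False using z[of "int i"] N unfolding X_def ext_def by auto
    qed
    then obtain i0 where i0: "i0 \<in> {0..N}" "Y i0 \<noteq> 0" by auto
    have "(\<Sum>i\<in>{0..N}. Y i * Y i) \<ge> Y i0 * Y i0" using i0 by (intro member_le_sum) auto
    moreover have "Y i0 * Y i0 > 0" using i0 not_real_square_gt_zero by blast
    ultimately show ?thesis by linarith
  qed
  have "(d2 (Hn s g) 0 + 4 * min (d2 (Hn s g) 1) 0) * (\<Sum>i\<in>{0..N}. Y i * Y i) > 0"
    using \<kappa> Ypos by simp
  then show ?thesis unfolding E using low by linarith
qed

end

lemma posC:
  assumes c0: "0 \<le> ccoef s g" and c1: "ccoef s g \<le> 1/4" and x: "\<exists>i<m - 1. x i \<noteq> 0"
  shows "qf (Cmat s g m) (m - 1) x > 0"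
proof -
  define n where "n = m - 1"
  define N where "N = int n + 2"
  have N: "int n \<le> N" "0 \<le> N" unfolding N_def by auto
  have sX: "supp (N - 1) (ext n x)" using supp_ext[of n x] by (rule supp_mono) (simp add: N_def)
  have "qf (Cmat s g m) (m - 1) x = TF (\<lambda>k. dl 0 k + ccoef s g * tri k) N (ext n x)"
    unfolding n_def by (rule qf_TF) (use Cmat_entry N in \<open>auto simp: n_def\<close>)
  also have "\<dots> > 0"
  proof (rule TF_C_pos[OF sX N(2) c0 c1])
    from x obtain i where "i < n" "x i \<noteq> 0" unfolding n_def by auto
    then show "\<exists>i\<in>{0..N}. ext n x i \<noteq> 0" using N by (intro bexI[of _ "int i"]) (auto simp: ext_def)
  qed
  finally show ?thesis .
qed

lemma symC: "i < m - 1 \<Longrightarrow> j < m - 1 \<Longrightarrow> Cmat s g m $$ (i,j) = Cmat s g m $$ (j,i)"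
  unfolding Cmat_def tridiag_def by auto


lemma Ez_vals:
  "Ez g 0 = 1" "Ez g 1 = 2 - g" "Ez g 2 = (2 - g) * (3 - g) / 2"
  "Ez g 3 = (2 - g) * (3 - g) * (4 - g) / 6" "Ez g (-1) = 0" "Ez g (-2) = 0"
proof -
  have e0: "ee g 0 = 1" by (rule ee0)
  have e1: "ee g (Suc 0) = 2 - g" using ee_Suc[of 0 g] e0 by simp
  have e2: "ee g (Suc (Suc 0)) = (2 - g) * (3 - g) / 2" using ee_Suc[of "Suc 0" g]
    by (simp add: e1 field_simps; simp add: algebra_simps)
  have e3: "ee g (Suc (Suc (Suc 0))) = (2 - g) * (3 - g) * (4 - g) / 6" using ee_Suc[of "Suc (Suc 0)" g]
    by (simp add: e2 field_simps; simp add: algebra_simps)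
  show "Ez g 0 = 1" using e0 Ez_nat[of g 0] by simp
  show "Ez g 1 = 2 - g" using e1 Ez_nat[of g "Suc 0"] by simp
  show "Ez g 2 = (2 - g) * (3 - g) / 2" using e2 Ez_nat[of g "Suc (Suc 0)"] by simp
  show "Ez g 3 = (2 - g) * (3 - g) * (4 - g) / 6" using e3 Ez_nat[of g "Suc (Suc (Suc 0))"] by simp
  show "Ez g (-1) = 0" "Ez g (-2) = 0" by (simp_all add: Ez_def Gzg_def)
qed

lemma d2_Hn: "d2 (Hn s g) 0 = Bz s g 0 - Bz s g 1 + Bz s g 2 / 2"
  "d2 (Hn s g) 1 = (Bz s g 1 - 2 * Bz s g 2 + Bz s g 3) / 2"
  by (simp_all add: d2_def Hn_def numeral_2_eq_2 numeral_3_eq_3)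

lemma kappa_10: assumes "1 < g" "g \<le> 2"
  shows "d2 (Hn PQ_1_0 g) 0 + 4 * min (d2 (Hn PQ_1_0 g) 1) 0 > 0"
proof -
  define \<mu> where "\<mu> = 2 - g"
  have \<mu>: "0 \<le> \<mu>" "\<mu> < 1" using assms unfolding \<mu>_def by auto
  have "d2 (Hn PQ_1_0 g) 1 \<ge> 0" unfolding d2_Hn
    using Bz_conv[of g 1 PQ_1_0] assms by simp
  then have m: "min (d2 (Hn PQ_1_0 g) 1) 0 = 0" by simp
  have "d2 (Hn PQ_1_0 g) 0 = (1 - \<mu>) * (8 - 6 * \<mu> + \<mu>^2) / 8"
    unfolding d2_Hn Bz_def \<mu>_def by (simp add: Ez_vals field_simps power2_eq_square; simp add: algebra_simps)
  moreover have "(1 - \<mu>) * (8 - 6 * \<mu> + \<mu>^2) > 0" using \<mu>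
    by (intro mult_pos_pos) (auto, smt (verit) zero_le_power2)
  ultimately show ?thesis unfolding m by simp
qed

lemma kappa_m1: assumes "3/2 \<le> g" "g \<le> 2"
  shows "d2 (Hn PQ_1_m1 g) 0 + 4 * min (d2 (Hn PQ_1_m1 g) 1) 0 > 0"
proof -
  define \<mu> where "\<mu> = 2 - g"
  have \<mu>: "0 \<le> \<mu>" "\<mu> \<le> 1/2" using assms unfolding \<mu>_def by auto
  have p2: "\<mu>^2 \<le> 1/4" "0 \<le> \<mu>^2" using \<mu> by (auto simp: power2_eq_square intro: mult_mono[of \<mu> "1/2" \<mu> "1/2", simplified])
  have p3: "0 \<le> \<mu>^3" "\<mu>^3 \<le> 1/8" using \<mu> power_mono[of \<mu> "1/2" 3] by (auto simp: power3_eq_cube)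
  have "\<mu>^4 \<le> (1/2)^4" by (rule power_mono) (use \<mu> in auto)
  then have p4: "\<mu>^4 \<le> 1/16" by (simp add: power_divide)
  have d0: "d2 (Hn PQ_1_m1 g) 0 = 1 - 7/8 * \<mu> + 7/16 * \<mu>^2 - 1/16 * \<mu>^3"
    unfolding d2_Hn Bz_def \<mu>_def by (simp add: Ez_vals field_simps power2_eq_square power3_eq_cube; simp add: algebra_simps)
  have d1: "d2 (Hn PQ_1_m1 g) 0 + 4 * d2 (Hn PQ_1_m1 g) 1 = 1 - 29/24 * \<mu> - 11/48 * \<mu>^2 + 25/48 * \<mu>^3 - 1/12 * \<mu>^4"
    unfolding d2_Hn Bz_def \<mu>_def
    by (simp add: Ez_vals field_simps power2_eq_square power3_eq_cube power4_eq_xxxx; simp add: algebra_simps)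
  have a: "d2 (Hn PQ_1_m1 g) 0 > 0" unfolding d0 using \<mu> p2 p3 by linarith
  have b: "d2 (Hn PQ_1_m1 g) 0 + 4 * d2 (Hn PQ_1_m1 g) 1 > 0" unfolding d1 using \<mu> p2 p3 p4 by linarith
  show ?thesis using a b by (cases "d2 (Hn PQ_1_m1 g) 1 \<ge> 0") (auto simp: min_def)
qed

lemma ccoef_10: assumes "1 < g" "g \<le> 2" shows "0 \<le> ccoef PQ_1_0 g" "ccoef PQ_1_0 g \<le> 1/4"
proof -
  have "0 \<le> g * (7 - 3 * g)" using assms by simp
  then show "0 \<le> ccoef PQ_1_0 g" by (simp add: ccoef_def power2_eq_square algebra_simps)
  have "0 \<le> 3 * (g - 7/6)^2 + 23/12" by simp
  then show "ccoef PQ_1_0 g \<le> 1/4" by (simp add: ccoef_def power2_eq_square algebra_simps)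
qed

lemma ccoef_m1: assumes "(1 + sqrt 73) / 6 \<le> g" "g \<le> 2" shows "0 \<le> ccoef PQ_1_m1 g" "ccoef PQ_1_m1 g \<le> 1/4"
proof -
  have s0: "0 \<le> sqrt 73" by simp
  have "6 * g - 1 \<ge> sqrt 73" using assms by simp
  then have "(6 * g - 1)^2 \<ge> (sqrt 73)^2" using s0 by (intro power_mono) auto
  then have q: "(6 * g - 1)^2 \<ge> 73" by simp
  have g0: "g \<ge> 0" using \<open>6 * g - 1 \<ge> sqrt 73\<close> s0 by linarith
  have "g * g \<le> 4" using assms(2) g0 by (intro mult_mono[of g 2 g 2, simplified]) auto
  moreover note g0
  ultimately show "0 \<le> ccoef PQ_1_m1 g" by (simp add: ccoef_def power2_eq_square)
  show "ccoef PQ_1_m1 g \<le> 1/4" using q by (simp add: ccoef_def power2_eq_square algebra_simps)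
qed

lemma sqrt73: "(1 + sqrt 73) / 6 \<ge> (3/2::real)"
proof -
  have "(8::real) \<le> sqrt 73" by (rule real_le_rsqrt) simp
  then show ?thesis by simp
qed


lemma kron_dim[simp]: "dim_row (kron A B) = dim_row A * dim_row B" "dim_col (kron A B) = dim_col A * dim_col B"
  unfolding kron_def by simp_all

lemma kron_index: "i < dim_row A * dim_row B \<Longrightarrow> j < dim_col A * dim_col B \<Longrightarrow>
  kron A B $$ (i,j) = A $$ (i div dim_row B, j div dim_col B) * B $$ (i mod dim_row B, j mod dim_col B)"
  unfolding kron_def by simp

lemma kron_carrier: "A \<in> carrier_mat a a \<Longrightarrow> B \<in> carrier_mat b b \<Longrightarrow> kron A B \<in> carrier_mat (a*b) (a*b)"
  by auto

lemma sum_div_mod: fixes f :: "nat \<Rightarrow> nat \<Rightarrow> real"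
  shows "(\<Sum>k<a*b. f (k div b) (k mod b)) = (\<Sum>p<a. \<Sum>q<b. f p q)"
proof -
  have "(\<Sum>k<a*b. f (k div b) (k mod b)) = (\<Sum>(p,q)\<in>{..<a} \<times> {..<b}. f p q)"
  proof (rule sum.reindex_bij_witness[where i="\<lambda>(p,q). p*b + q" and j="\<lambda>k. (k div b, k mod b)"])
    fix k assume k: "k \<in> {..<a*b}"
    then have b: "0 < b" by (cases b) auto
    show "(\<lambda>(p,q). p*b + q) (k div b, k mod b) = k" by simp
    show "(k div b, k mod b) \<in> {..<a} \<times> {..<b}" using k b
      by (auto simp: less_mult_imp_div_less)
    show "(case (k div b, k mod b) of (p, q) \<Rightarrow> f p q) = f (k div b) (k mod b)" by simp
  next
    fix pq assume pq: "pq \<in> {..<a} \<times> {..<b}"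
    obtain p q where pq': "pq = (p,q)" by (cases pq)
    with pq have p: "p < a" and q: "q < b" by auto
    show "((\<lambda>(p,q). p*b + q) pq div b, (\<lambda>(p,q). p*b + q) pq mod b) = pq" using pq' q by simp
    have "p * b + q < (p + 1) * b" using q by simp
    also have "\<dots> \<le> a * b" using p by (intro mult_le_mono1) simp
    finally show "(\<lambda>(p,q). p*b + q) pq \<in> {..<a*b}" using pq' by simp
  qed
  also have "\<dots> = (\<Sum>p<a. \<Sum>q<b. f p q)" by (simp add: sum.cartesian_product)
  finally show ?thesis .
qed

lemma kron_mult: assumes A: "A \<in> carrier_mat a a" and C: "C \<in> carrier_mat a a"
  and B: "B \<in> carrier_mat b b" and D: "D \<in> carrier_mat b b"
  shows "kron A B * kron C D = kron (A * C) (B * D)"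
proof (rule eq_matI)
  fix i j assume i: "i < dim_row (kron (A * C) (B * D))" and j: "j < dim_col (kron (A * C) (B * D))"
  then have i': "i < a * b" and j': "j < a * b" using A B C D by auto
  then have b: "0 < b" by (cases b) auto
  have id: "i div b < a" "j div b < a" "i mod b < b" "j mod b < b" using i' j' b
    by (auto simp: less_mult_imp_div_less)
  have "(kron A B * kron C D) $$ (i,j) = (\<Sum>k<a*b. kron A B $$ (i,k) * kron C D $$ (k,j))"
    using A B C D i' j' by (simp add: scalar_prod_def atLeast0LessThan)
  also have "\<dots> = (\<Sum>k<a*b. (\<lambda>p q. (A $$ (i div b, p) * C $$ (p, j div b)) * (B $$ (i mod b, q) * D $$ (q, j mod b))) (k div b) (k mod b))"
  proof (rule sum.cong[OF refl])
    fix k assume "k \<in> {..<a*b}"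
    then show "kron A B $$ (i,k) * kron C D $$ (k,j) = (\<lambda>p q. (A $$ (i div b, p) * C $$ (p, j div b)) * (B $$ (i mod b, q) * D $$ (q, j mod b))) (k div b) (k mod b)"
      using A B C D i' j' by (simp add: kron_index)
  qed
  also have "\<dots> = (\<Sum>p<a. \<Sum>q<b. (A $$ (i div b, p) * C $$ (p, j div b)) * (B $$ (i mod b, q) * D $$ (q, j mod b)))"
    by (rule sum_div_mod)
  also have "\<dots> = (\<Sum>p<a. A $$ (i div b, p) * C $$ (p, j div b)) * (\<Sum>q<b. B $$ (i mod b, q) * D $$ (q, j mod b))"
    by (simp add: sum_product)
  also have "\<dots> = kron (A * C) (B * D) $$ (i,j)"
    using A B C D i' j' id by (simp add: kron_index scalar_prod_def atLeast0LessThan)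
  finally show "(kron A B * kron C D) $$ (i,j) = kron (A * C) (B * D) $$ (i,j)" .
qed (use A B C D in auto)

lemma kron_one: "kron (1\<^sub>m a) (1\<^sub>m b) = (1\<^sub>m (a*b) :: real mat)"
proof (rule eq_matI)
  fix i j assume "i < dim_row (1\<^sub>m (a*b) :: real mat)" "j < dim_col (1\<^sub>m (a*b) :: real mat)"
  then have i: "i < a*b" and j: "j < a*b" by auto
  then have b: "0 < b" by (cases b) auto
  have id: "i div b < a" "j div b < a" "i mod b < b" "j mod b < b" using i j b
    by (auto simp: less_mult_imp_div_less)
  have "(i div b = j div b \<and> i mod b = j mod b) = (i = j)" by (metis div_mult_mod_eq)
  then show "kron (1\<^sub>m a) (1\<^sub>m b) $$ (i,j) = 1\<^sub>m (a*b) $$ (i,j)"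
    using i j id by (auto simp: kron_index)
qed auto

lemma kron_pow: assumes A: "A \<in> carrier_mat a a" and B: "B \<in> carrier_mat b b"
  shows "kron A B ^\<^sub>m k = kron (A ^\<^sub>m k) (B ^\<^sub>m k)"
proof (induction k)
  case 0 show ?case using A B by (simp add: kron_one)
next
  case (Suc k)
  have "kron A B ^\<^sub>m Suc k = kron (A ^\<^sub>m k) (B ^\<^sub>m k) * kron A B" using Suc by simp
  also have "\<dots> = kron (A ^\<^sub>m k * A) (B ^\<^sub>m k * B)" using A B by (intro kron_mult) auto
  finally show ?case by simp
qed

lemma mod_lt_aux[simp]: "i < (b::nat) * r \<Longrightarrow> i mod b < b"
  by (cases b) auto

lemma kron_lin2: assumes "X \<in> carrier_mat b b" "Y \<in> carrier_mat b b"
  shows "kron A X - c \<cdot>\<^sub>m kron A Y = kron A (X - c \<cdot>\<^sub>m Y)"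
    "kron A X + c \<cdot>\<^sub>m kron A Y = kron A (X + c \<cdot>\<^sub>m Y)"
  using assms by (auto intro!: eq_matI simp: kron_index algebra_simps)

lemma kron_lin1: assumes "X \<in> carrier_mat b b" "Y \<in> carrier_mat b b"
  shows "kron X A - c \<cdot>\<^sub>m kron Y A = kron (X - c \<cdot>\<^sub>m Y) A"
    "kron X A + c \<cdot>\<^sub>m kron Y A = kron (X + c \<cdot>\<^sub>m Y) A"
  using assms by (auto intro!: eq_matI simp: kron_index algebra_simps less_mult_imp_div_less)


lemma Amat_carrier: "Amat s g m \<in> carrier_mat (m - 1) (m - 1)" unfolding Amat_def by simp
lemma Cmat_carrier: "Cmat s g m \<in> carrier_mat (m - 1) (m - 1)" unfolding Cmat_def tridiag_def by simp

lemma qf_D: assumes A: "A \<in> carrier_mat n n"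
  shows "qf (k \<cdot>\<^sub>m (K1 \<cdot>\<^sub>m A + K2 \<cdot>\<^sub>m transpose_mat A)) n x = k * (K1 + K2) * qf A n x"
proof -
  have "qf (k \<cdot>\<^sub>m (K1 \<cdot>\<^sub>m A + K2 \<cdot>\<^sub>m transpose_mat A)) n x
      = (\<Sum>i<n. \<Sum>j<n. (k * K1) * (A $$ (i,j) * x i * x j) + (k * K2) * (A $$ (j,i) * x i * x j))"
    unfolding qf_def using A by (intro sum.cong refl) (simp add: algebra_simps)
  also have "\<dots> = (k * K1) * qf A n x + (k * K2) * (\<Sum>i<n. \<Sum>j<n. A $$ (j,i) * x i * x j)"
    unfolding qf_def by (simp only: sum.distrib sum_distrib_left)
  also have "(\<Sum>i<n. \<Sum>j<n. A $$ (j,i) * x i * x j) = qf A n x"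
    unfolding qf_def by (subst sum.swap) (simp add: mult.commute mult.left_commute)
  finally show ?thesis by (simp add: algebra_simps)
qed

lemma stab1d:
  fixes s :: shift and g k K1 K2 :: real and m :: nat
  assumes g1: "1 \<le> g" and g2: "g \<le> 2"
    and \<kappa>: "d2 (Hn s g) 0 + 4 * min (d2 (Hn s g) 1) 0 > 0"
    and c0: "0 \<le> ccoef s g" and c1: "ccoef s g \<le> 1/4"
    and k: "0 < k" and K1: "0 \<le> K1" and K2: "0 \<le> K2" and K: "K1^2 + K2^2 \<noteq> 0"
  shows "\<exists>Pi \<in> carrier_mat (m - 1) (m - 1).
    (Cmat s g m - k \<cdot>\<^sub>m (K1 \<cdot>\<^sub>m Amat s g m + K2 \<cdot>\<^sub>m transpose_mat (Amat s g m))) * Pi = 1\<^sub>m (m - 1) \<and>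
    Pi * (Cmat s g m - k \<cdot>\<^sub>m (K1 \<cdot>\<^sub>m Amat s g m + K2 \<cdot>\<^sub>m transpose_mat (Amat s g m))) = 1\<^sub>m (m - 1) \<and>
    (\<forall>i < m - 1. \<forall>j < m - 1. (\<lambda>t. ((Pi * (Cmat s g m + k \<cdot>\<^sub>m (K1 \<cdot>\<^sub>m Amat s g m + K2 \<cdot>\<^sub>m transpose_mat (Amat s g m)))) ^\<^sub>m t) $$ (i,j)) \<longlonglongrightarrow> 0)"
proof -
  define n where "n = m - 1"
  define A where "A = Amat s g m"
  define C where "C = Cmat s g m"
  define D where "D = k \<cdot>\<^sub>m (K1 \<cdot>\<^sub>m A + K2 \<cdot>\<^sub>m transpose_mat A)"
  have A: "A \<in> carrier_mat n n" unfolding A_def n_def by (rule Amat_carrier)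
  have C: "C \<in> carrier_mat n n" unfolding C_def n_def by (rule Cmat_carrier)
  have D: "D \<in> carrier_mat n n" unfolding D_def using A by simp
  have posC': "\<And>x. (\<exists>i<n. x i \<noteq> 0) \<Longrightarrow> qf C n x > 0"
    unfolding C_def n_def by (rule posC[OF c0 c1])
  have KK: "K1 + K2 > 0"
  proof (rule ccontr)
    assume "\<not> K1 + K2 > 0"
    then have "K1 = 0" "K2 = 0" using K1 K2 by auto
    then show False using K by simp
  qed
  have negD': "\<And>x. (\<exists>i<n. x i \<noteq> 0) \<Longrightarrow> qf D n x < 0"
  proof -
    fix x :: "nat \<Rightarrow> real" assume x: "\<exists>i<n. x i \<noteq> 0"
    have "qf A n x < 0" unfolding A_def n_def by (rule negA[OF g1 g2 \<kappa>]) (use x in \<open>simp add: n_def\<close>)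
    moreover have "k * (K1 + K2) > 0" using k KK by simp
    ultimately show "qf D n x < 0" unfolding D_def qf_D[OF A] by (simp add: mult_pos_neg)
  qed
  have symC': "\<And>i j. i < n \<Longrightarrow> j < n \<Longrightarrow> C $$ (i,j) = C $$ (j,i)"
    unfolding C_def n_def by (rule symC)
  from inv_from_forms[OF C D posC' negD'] obtain Pi where Pi: "Pi \<in> carrier_mat n n"
    "(C - D) * Pi = 1\<^sub>m n" "Pi * (C - D) = 1\<^sub>m n" by auto
  define R where "R = Pi * (C + D)"
  have R: "R \<in> carrier_mat n n" unfolding R_def using Pi C D by simp
  have PR: "(C - D) * R = C + D" unfolding R_def
    using Pi C D by (simp add: assoc_mult_mat[symmetric, of "C - D" n n Pi n "C + D" n])
  have en: "\<And>x. (\<exists>i<n. x i \<noteq> 0) \<Longrightarrow> qf C n (mv R n x) < qf C n x"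
  proof -
    fix x :: "nat \<Rightarrow> real" assume x: "\<exists>i<n. x i \<noteq> 0"
    show "qf C n (mv R n x) < qf C n x"
    proof (rule energy_step[OF symC' posC' negD' _ x])
      fix i assume i: "i < n"
      have "mv (C - D) n (mv R n x) i = mv ((C - D) * R) n x i"
        using mv_mult[of "C - D" n R i x] C D R i by simp
      also have "\<dots> = mv (C + D) n x i" unfolding PR ..
      finally show "mv C n (mv R n x) i - mv D n (mv R n x) i = mv C n x i + mv D n x i"
        using mv_minus[OF C D i] mv_plus[OF C D i] by simp
    qed
  qed
  have conv: "\<forall>i<n. \<forall>j<n. (\<lambda>t. (R ^\<^sub>m t) $$ (i,j)) \<longlonglongrightarrow> 0"
    using conv_from_energy[OF R posC' en] by blast
  show ?thesis
    using Pi conv unfolding R_def C_def D_def A_def n_def by blast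
qed


lemma main_generic:
  fixes s :: shift and \<alpha> \<beta> :: real
  assumes a1: "1 \<le> \<alpha>" and a2: "\<alpha> \<le> 2" and ka: "d2 (Hn s \<alpha>) 0 + 4 * min (d2 (Hn s \<alpha>) 1) 0 > 0"
    and ca0: "0 \<le> ccoef s \<alpha>" and ca1: "ccoef s \<alpha> \<le> 1/4"
    and b1: "1 \<le> \<beta>" and b2: "\<beta> \<le> 2" and kb: "d2 (Hn s \<beta>) 0 + 4 * min (d2 (Hn s \<beta>) 1) 0 > 0"
    and cb0: "0 \<le> ccoef s \<beta>" and cb1: "ccoef s \<beta> \<le> 1/4"
  shows "uncond_stable s \<alpha> \<beta>"
  unfolding uncond_stable_def Let_def
proof (intro allI impI)
  fix Nx Ny :: nat and \<tau> h K1p K2p K1m K2m :: real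
  assume H: "1 \<le> Nx \<and> 1 \<le> Ny \<and> 0 < \<tau> \<and> 0 < h \<and> 0 \<le> K1p \<and> 0 \<le> K2p \<and> 0 \<le> K1m \<and> 0 \<le> K2m \<and>
       K1p\<^sup>2 + K2p\<^sup>2 \<noteq> 0 \<and> K1m\<^sup>2 + K2m\<^sup>2 \<noteq> 0"
  define a where "a = Ny - 1"
  define b where "b = Nx - 1"
  define k\<alpha> where "k\<alpha> = \<tau> / (2 * h powr \<alpha>)"
  define k\<beta> where "k\<beta> = \<tau> / (2 * h powr \<beta>)"
  have k\<alpha>: "0 < k\<alpha>" unfolding k\<alpha>_def using H by simp
  have k\<beta>: "0 < k\<beta>" unfolding k\<beta>_def using H by simp
  define M\<alpha> where "M\<alpha> = K1p \<cdot>\<^sub>m Amat s \<alpha> Nx + K2p \<cdot>\<^sub>m transpose_mat (Amat s \<alpha> Nx)"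
  define M\<beta> where "M\<beta> = K1m \<cdot>\<^sub>m Amat s \<beta> Ny + K2m \<cdot>\<^sub>m transpose_mat (Amat s \<beta> Ny)"
  define C\<alpha> where "C\<alpha> = Cmat s \<alpha> Nx"
  define C\<beta> where "C\<beta> = Cmat s \<beta> Ny"
  have M\<alpha>c: "M\<alpha> \<in> carrier_mat b b" unfolding M\<alpha>_def b_def using Amat_carrier by simp
  have M\<beta>c: "M\<beta> \<in> carrier_mat a a" unfolding M\<beta>_def a_def using Amat_carrier by simp
  have C\<alpha>c: "C\<alpha> \<in> carrier_mat b b" unfolding C\<alpha>_def b_def by (rule Cmat_carrier)
  have C\<beta>c: "C\<beta> \<in> carrier_mat a a" unfolding C\<beta>_def a_def by (rule Cmat_carrier)
  from stab1d[OF a1 a2 ka ca0 ca1 k\<alpha>, of K1p K2p Nx] H obtain P\<alpha>i where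
    P\<alpha>i: "P\<alpha>i \<in> carrier_mat b b" "(C\<alpha> - k\<alpha> \<cdot>\<^sub>m M\<alpha>) * P\<alpha>i = 1\<^sub>m b" "P\<alpha>i * (C\<alpha> - k\<alpha> \<cdot>\<^sub>m M\<alpha>) = 1\<^sub>m b"
    and conv\<alpha>: "\<forall>i<b. \<forall>j<b. (\<lambda>t. ((P\<alpha>i * (C\<alpha> + k\<alpha> \<cdot>\<^sub>m M\<alpha>)) ^\<^sub>m t) $$ (i,j)) \<longlonglongrightarrow> 0"
    unfolding b_def C\<alpha>_def M\<alpha>_def by blast
  from stab1d[OF b1 b2 kb cb0 cb1 k\<beta>, of K1m K2m Ny] H obtain P\<beta>i where
    P\<beta>i: "P\<beta>i \<in> carrier_mat a a" "(C\<beta> - k\<beta> \<cdot>\<^sub>m M\<beta>) * P\<beta>i = 1\<^sub>m a" "P\<beta>i * (C\<beta> - k\<beta> \<cdot>\<^sub>m M\<beta>) = 1\<^sub>m a"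
    and conv\<beta>: "\<forall>i<a. \<forall>j<a. (\<lambda>t. ((P\<beta>i * (C\<beta> + k\<beta> \<cdot>\<^sub>m M\<beta>)) ^\<^sub>m t) $$ (i,j)) \<longlonglongrightarrow> 0"
    unfolding a_def C\<beta>_def M\<beta>_def by blast
  define P\<alpha> where "P\<alpha> = C\<alpha> - k\<alpha> \<cdot>\<^sub>m M\<alpha>"
  define Q\<alpha> where "Q\<alpha> = C\<alpha> + k\<alpha> \<cdot>\<^sub>m M\<alpha>"
  define P\<beta> where "P\<beta> = C\<beta> - k\<beta> \<cdot>\<^sub>m M\<beta>"
  define Q\<beta> where "Q\<beta> = C\<beta> + k\<beta> \<cdot>\<^sub>m M\<beta>"
  have P\<alpha>c: "P\<alpha> \<in> carrier_mat b b" "Q\<alpha> \<in> carrier_mat b b" unfolding P\<alpha>_def Q\<alpha>_def using C\<alpha>c M\<alpha>c by auto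
  have P\<beta>c: "P\<beta> \<in> carrier_mat a a" "Q\<beta> \<in> carrier_mat a a" unfolding P\<beta>_def Q\<beta>_def using C\<beta>c M\<beta>c by auto
  have I1: "1\<^sub>m a \<in> carrier_mat a a" "1\<^sub>m b \<in> carrier_mat b b" by auto
  have Cx: "CXm s \<alpha> Nx Ny = kron (1\<^sub>m a) C\<alpha>" unfolding CXm_def a_def C\<alpha>_def ..
  have Dx: "DXm s \<alpha> Nx Ny \<tau> h K1p K2p = k\<alpha> \<cdot>\<^sub>m kron (1\<^sub>m a) M\<alpha>" unfolding DXm_def a_def M\<alpha>_def k\<alpha>_def ..
  have Cy: "CYm s \<beta> Nx Ny = kron C\<beta> (1\<^sub>m b)" unfolding CYm_def b_def C\<beta>_def ..
  have Dy: "DYm s \<beta> Nx Ny \<tau> h K1m K2m = k\<beta> \<cdot>\<^sub>m kron M\<beta> (1\<^sub>m b)" unfolding DYm_def b_def M\<beta>_def k\<beta>_def ..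
  have XP: "CXm s \<alpha> Nx Ny - DXm s \<alpha> Nx Ny \<tau> h K1p K2p = kron (1\<^sub>m a) P\<alpha>"
    unfolding Cx Dx P\<alpha>_def by (rule kron_lin2(1)[OF C\<alpha>c M\<alpha>c])
  have XQ: "CXm s \<alpha> Nx Ny + DXm s \<alpha> Nx Ny \<tau> h K1p K2p = kron (1\<^sub>m a) Q\<alpha>"
    unfolding Cx Dx Q\<alpha>_def by (rule kron_lin2(2)[OF C\<alpha>c M\<alpha>c])
  have YP: "CYm s \<beta> Nx Ny - DYm s \<beta> Nx Ny \<tau> h K1m K2m = kron P\<beta> (1\<^sub>m b)"
    unfolding Cy Dy P\<beta>_def by (rule kron_lin1(1)[OF C\<beta>c M\<beta>c])
  have YQ: "CYm s \<beta> Nx Ny + DYm s \<beta> Nx Ny \<tau> h K1m K2m = kron Q\<beta> (1\<^sub>m b)"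
    unfolding Cy Dy Q\<beta>_def by (rule kron_lin1(2)[OF C\<beta>c M\<beta>c])
  have P\<alpha>i': "P\<alpha> * P\<alpha>i = 1\<^sub>m b" "P\<alpha>i * P\<alpha> = 1\<^sub>m b" using P\<alpha>i unfolding P\<alpha>_def by auto
  have P\<beta>i': "P\<beta> * P\<beta>i = 1\<^sub>m a" "P\<beta>i * P\<beta> = 1\<^sub>m a" using P\<beta>i unfolding P\<beta>_def by auto
  have invX1: "kron (1\<^sub>m a) P\<alpha> * kron (1\<^sub>m a) P\<alpha>i = 1\<^sub>m (a*b)"
    using kron_mult[OF I1(1) I1(1) P\<alpha>c(1) P\<alpha>i(1)] P\<alpha>i' by (simp add: kron_one)
  have invX2: "kron (1\<^sub>m a) P\<alpha>i * kron (1\<^sub>m a) P\<alpha> = 1\<^sub>m (a*b)"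
    using kron_mult[OF I1(1) I1(1) P\<alpha>i(1) P\<alpha>c(1)] P\<alpha>i' by (simp add: kron_one)
  have invY1: "kron P\<beta> (1\<^sub>m b) * kron P\<beta>i (1\<^sub>m b) = 1\<^sub>m (a*b)"
    using kron_mult[OF P\<beta>c(1) P\<beta>i(1) I1(2) I1(2)] P\<beta>i' by (simp add: kron_one)
  have invY2: "kron P\<beta>i (1\<^sub>m b) * kron P\<beta> (1\<^sub>m b) = 1\<^sub>m (a*b)"
    using kron_mult[OF P\<beta>i(1) P\<beta>c(1) I1(2) I1(2)] P\<beta>i' by (simp add: kron_one)
  have cX: "kron (1\<^sub>m a) P\<alpha> \<in> carrier_mat (a*b) (a*b)" "kron (1\<^sub>m a) P\<alpha>i \<in> carrier_mat (a*b) (a*b)"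
    using P\<alpha>c P\<alpha>i by auto
  have cY: "kron P\<beta> (1\<^sub>m b) \<in> carrier_mat (a*b) (a*b)" "kron P\<beta>i (1\<^sub>m b) \<in> carrier_mat (a*b) (a*b)"
    using P\<beta>c P\<beta>i by auto
  have invX: "invertible_mat (kron (1\<^sub>m a) P\<alpha>)"
    unfolding invertible_mat_def inverts_mat_def using cX invX1 invX2 P\<alpha>c P\<alpha>i(1)
    by (intro conjI exI[of _ "kron (1\<^sub>m a) P\<alpha>i"]) auto
  have invY: "invertible_mat (kron P\<beta> (1\<^sub>m b))"
    unfolding invertible_mat_def inverts_mat_def using cY invY1 invY2 P\<beta>c P\<beta>i(1)
    by (intro conjI exI[of _ "kron P\<beta>i (1\<^sub>m b)"]) auto
  have mX: "matinv (kron (1\<^sub>m a) P\<alpha>) = kron (1\<^sub>m a) P\<alpha>i" by (rule matinv_eq[OF cX invX1 invX2])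
  have mY: "matinv (kron P\<beta> (1\<^sub>m b)) = kron P\<beta>i (1\<^sub>m b)" by (rule matinv_eq[OF cY invY1 invY2])
  define R\<alpha> where "R\<alpha> = P\<alpha>i * Q\<alpha>"
  define R\<beta> where "R\<beta> = P\<beta>i * Q\<beta>"
  have R\<alpha>c: "R\<alpha> \<in> carrier_mat b b" unfolding R\<alpha>_def using P\<alpha>i P\<alpha>c by simp
  have R\<beta>c: "R\<beta> \<in> carrier_mat a a" unfolding R\<beta>_def using P\<beta>i P\<beta>c by simp
  have G: "kron P\<beta>i (1\<^sub>m b) * kron (1\<^sub>m a) P\<alpha>i * kron (1\<^sub>m a) Q\<alpha> * kron Q\<beta> (1\<^sub>m b) = kron R\<beta> R\<alpha>"
  proof -
    have "kron P\<beta>i (1\<^sub>m b) * kron (1\<^sub>m a) P\<alpha>i = kron P\<beta>i P\<alpha>i"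
      using kron_mult[OF P\<beta>i(1) I1(1) I1(2) P\<alpha>i(1)] P\<beta>i(1) P\<alpha>i(1) by simp
    moreover have "kron P\<beta>i P\<alpha>i * kron (1\<^sub>m a) Q\<alpha> = kron P\<beta>i R\<alpha>"
      using kron_mult[OF P\<beta>i(1) I1(1) P\<alpha>i(1) P\<alpha>c(2)] P\<beta>i(1) unfolding R\<alpha>_def by simp
    moreover have "kron P\<beta>i R\<alpha> * kron Q\<beta> (1\<^sub>m b) = kron R\<beta> R\<alpha>"
      using kron_mult[OF P\<beta>i(1) P\<beta>c(2) R\<alpha>c I1(2)] R\<alpha>c unfolding R\<beta>_def by simp
    ultimately show ?thesis by simp
  qed
  have Gdef: "matinv (CYm s \<beta> Nx Ny - DYm s \<beta> Nx Ny \<tau> h K1m K2m) * matinv (CXm s \<alpha> Nx Ny - DXm s \<alpha> Nx Ny \<tau> h K1p K2p) *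
      (CXm s \<alpha> Nx Ny + DXm s \<alpha> Nx Ny \<tau> h K1p K2p) * (CYm s \<beta> Nx Ny + DYm s \<beta> Nx Ny \<tau> h K1m K2m) = kron R\<beta> R\<alpha>"
    unfolding XP XQ YP YQ mX mY by (rule G)
  have d: "(Nx - 1) * (Ny - 1) = a * b" unfolding a_def b_def by simp
  have conv_all: "\<forall>i<a*b. \<forall>j<a*b. (\<lambda>t. (kron R\<beta> R\<alpha> ^\<^sub>m t) $$ (i,j)) \<longlonglongrightarrow> 0"
  proof (intro allI impI)
    fix i j assume i: "i < a * b" and j: "j < a * b"
    have b0: "0 < b" using i by (cases b) auto
    have id: "i div b < a" "j div b < a" "i mod b < b" "j mod b < b" using i j b0
      by (auto simp: less_mult_imp_div_less)
    have e: "(kron R\<beta> R\<alpha> ^\<^sub>m t) $$ (i,j) = (R\<beta> ^\<^sub>m t) $$ (i div b, j div b) * (R\<alpha> ^\<^sub>m t) $$ (i mod b, j mod b)" for t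
      unfolding kron_pow[OF R\<beta>c R\<alpha>c] using i j R\<alpha>c R\<beta>c by (simp add: kron_index)
    have "(\<lambda>t. (R\<beta> ^\<^sub>m t) $$ (i div b, j div b) * (R\<alpha> ^\<^sub>m t) $$ (i mod b, j mod b)) \<longlonglongrightarrow> 0 * 0"
      using conv\<beta> conv\<alpha> id unfolding R\<alpha>_def R\<beta>_def Q\<alpha>_def Q\<beta>_def by (intro tendsto_mult) auto
    then show "(\<lambda>t. (kron R\<beta> R\<alpha> ^\<^sub>m t) $$ (i,j)) \<longlonglongrightarrow> 0" unfolding e by simp
  qed
  show "invertible_mat (CYm s \<beta> Nx Ny - DYm s \<beta> Nx Ny \<tau> h K1m K2m) \<and>
        invertible_mat (CXm s \<alpha> Nx Ny - DXm s \<alpha> Nx Ny \<tau> h K1p K2p) \<and>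
        (\<forall>i<(Nx - 1) * (Ny - 1). \<forall>j<(Nx - 1) * (Ny - 1).
          (\<lambda>n. ((matinv (CYm s \<beta> Nx Ny - DYm s \<beta> Nx Ny \<tau> h K1m K2m) * matinv (CXm s \<alpha> Nx Ny - DXm s \<alpha> Nx Ny \<tau> h K1p K2p) *
            (CXm s \<alpha> Nx Ny + DXm s \<alpha> Nx Ny \<tau> h K1p K2p) * (CYm s \<beta> Nx Ny + DYm s \<beta> Nx Ny \<tau> h K1m K2m)) ^\<^sub>m n) $$ (i, j)) \<longlonglongrightarrow> 0)"
    unfolding d XP XQ YP YQ mX mY G by (rule conjI[OF invY conjI[OF invX conv_all]])

qed

theorem theorem3:
  shows "(\<forall>\<alpha> \<beta> :: real. 1 < \<alpha> \<and> \<alpha> \<le> 2 \<and> 1 < \<beta> \<and> \<beta> \<le> 2 \<longrightarrow>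
            uncond_stable PQ_1_0 \<alpha> \<beta>)
       \<and> (\<forall>\<alpha> \<beta> :: real. (1 + sqrt 73) / 6 \<le> \<alpha> \<and> \<alpha> \<le> 2 \<and>
            (1 + sqrt 73) / 6 \<le> \<beta> \<and> \<beta> \<le> 2 \<longrightarrow> uncond_stable PQ_1_m1 \<alpha> \<beta>)"
proof (intro conjI allI impI)
  fix \<alpha> \<beta> :: real assume H: "1 < \<alpha> \<and> \<alpha> \<le> 2 \<and> 1 < \<beta> \<and> \<beta> \<le> 2"
  show "uncond_stable PQ_1_0 \<alpha> \<beta>"
    by (rule main_generic) (use H kappa_10 ccoef_10 in auto)
next
  fix \<alpha> \<beta> :: real assume H: "(1 + sqrt 73) / 6 \<le> \<alpha> \<and> \<alpha> \<le> 2 \<and> (1 + sqrt 73) / 6 \<le> \<beta> \<and> \<beta> \<le> 2"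
  have a: "3/2 \<le> \<alpha>" "3/2 \<le> \<beta>" using H sqrt73 by linarith+
  show "uncond_stable PQ_1_m1 \<alpha> \<beta>"
    by (rule main_generic) (use H a kappa_m1 ccoef_m1 in auto)
qed


end
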